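(* Let $k$ be a field of characteristic $p>2$ ($p$ prime). The $T$-space $(W')^S$ of $k_1\langle X\rangle$ is not finitely based.
   Context: $X=\{x_i\mid i\ge0\}$ countably infinite; $k_1\langle X\rangle$ the free unitary associative $k$-algebra on $X$; $[a,b]=ab-ba$. A $T$-space is a subspace invariant under all endomorphisms of $k_1\langle X\rangle$; $H^S$ is the smallest $T$-space containing $H$; a $T$-space is finitely based if it equals $H^S$ for some finite $H$. $\kappa(u,v)=[u,v]u^{p-1}v^{p-1}$, $w_m=\prod_{r=1}^m\kappa(x_{2r-1},x_{2r})$, $w_m(u_1,\ldots,u_{2m})$ the image under $x_j\mapsto u_j$. For $m\ge1$, $I_m$ is the set of strictly increasing functions $\{1,\ldots,2m\}\to\mathbb{Z}^+$, $W_m=\{w_j(x_{f(1)},\ldots,x_{f(2j)})\mid 1\le j\le m,\ f\in I_j\}$, $W=\bigcup_{m\ge1}W_m$, and $W'=\{1\}\cup W$. *)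

theory Defs
  imports Main "HOL-Computational_Algebra.Primes"
begin

text \<open>The free unitary associative k-algebra k_1<X> on X = {x_i | i >= 0}:
  an element is a finitely supported function from words (lists of variable
  indices) to k; the word [i1,...,in] stands for the monomial x_i1 ... x_in.\<close>

type_synonym 'k fa = "nat list \<Rightarrow> 'k"

definition fa_carrier :: "('k::field) fa set" where
  "fa_carrier = {f. finite {w. f w \<noteq> 0}}"

definition fa_zero :: "('k::field) fa" where
  "fa_zero = (\<lambda>w. 0)"

definition fa_one :: "('k::field) fa" where
  "fa_one = (\<lambda>w. if w = [] then 1 else 0)"

definition fa_var :: "nat \<Rightarrow> ('k::field) fa" where
  "fa_var i = (\<lambda>w. if w = [i] then 1 else 0)"

definition fa_add :: "('k::field) fa \<Rightarrow> 'k fa \<Rightarrow> 'k fa" where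
  "fa_add f g = (\<lambda>w. f w + g w)"

definition fa_sub :: "('k::field) fa \<Rightarrow> 'k fa \<Rightarrow> 'k fa" where
  "fa_sub f g = (\<lambda>w. f w - g w)"

definition fa_smult :: "'k::field \<Rightarrow> 'k fa \<Rightarrow> 'k fa" where
  "fa_smult c f = (\<lambda>w. c * f w)"

definition fa_mult :: "('k::field) fa \<Rightarrow> 'k fa \<Rightarrow> 'k fa" where
  "fa_mult f g = (\<lambda>w. \<Sum>i\<le>length w. f (take i w) * g (drop i w))"

definition fa_prodlist :: "('k::field) fa list \<Rightarrow> 'k fa" where
  "fa_prodlist xs = foldr fa_mult xs fa_one"

definition fa_pow :: "('k::field) fa \<Rightarrow> nat \<Rightarrow> 'k fa" where
  "fa_pow a n = fa_prodlist (replicate n a)"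

definition fa_comm :: "('k::field) fa \<Rightarrow> 'k fa \<Rightarrow> 'k fa" where
  "fa_comm a b = fa_sub (fa_mult a b) (fa_mult b a)"

definition fa_subst :: "(nat \<Rightarrow> ('k::field) fa) \<Rightarrow> 'k fa \<Rightarrow> 'k fa" where
  "fa_subst \<sigma> f = (\<lambda>v. \<Sum>w\<in>{w. f w \<noteq> 0}. f w * fa_prodlist (map \<sigma> w) v)"

definition is_subspace :: "('k::field) fa set \<Rightarrow> bool" where
  "is_subspace V \<longleftrightarrow> V \<subseteq> fa_carrier \<and> fa_zero \<in> V \<and>
     (\<forall>f\<in>V. \<forall>g\<in>V. fa_add f g \<in> V) \<and> (\<forall>c. \<forall>f\<in>V. fa_smult c f \<in> V)"

definition T_space :: "('k::field) fa set \<Rightarrow> bool" where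
  "T_space V \<longleftrightarrow> is_subspace V \<and>
     (\<forall>\<sigma>. (\<forall>i. \<sigma> i \<in> fa_carrier) \<longrightarrow> (\<forall>f\<in>V. fa_subst \<sigma> f \<in> V))"

text \<open>H^S: the smallest T-space containing H.\<close>
definition T_closure :: "('k::field) fa set \<Rightarrow> 'k fa set" where
  "T_closure H = \<Inter>{V. T_space V \<and> H \<subseteq> V}"

definition finitely_based :: "('k::field) fa set \<Rightarrow> bool" where
  "finitely_based V \<longleftrightarrow> (\<exists>H. finite H \<and> H \<subseteq> fa_carrier \<and> V = T_closure H)"

definition kappa :: "nat \<Rightarrow> ('k::field) fa \<Rightarrow> 'k fa \<Rightarrow> 'k fa" where
  "kappa p u v = fa_mult (fa_mult (fa_comm u v) (fa_pow u (p - 1))) (fa_pow v (p - 1))"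

definition w_poly :: "nat \<Rightarrow> nat \<Rightarrow> (nat \<Rightarrow> ('k::field) fa) \<Rightarrow> 'k fa" where
  "w_poly p m u = fa_prodlist (map (\<lambda>r. kappa p (u (2*r - 1)) (u (2*r))) [1..<m+1])"

text \<open>I_m: strictly increasing functions {1,...,2m} -> Z^+ (values outside
  {1..2m} irrelevant).\<close>
definition I_set :: "nat \<Rightarrow> (nat \<Rightarrow> nat) set" where
  "I_set m = {f. strict_mono_on {1..2*m} f \<and> (\<forall>r\<in>{1..2*m}. 1 \<le> f r)}"

definition W_set :: "nat \<Rightarrow> nat \<Rightarrow> ('k::field) fa set" where
  "W_set p m = {w_poly p j (\<lambda>r. fa_var (f r)) | j f. 1 \<le> j \<and> j \<le> m \<and> f \<in> I_set j}"

definition W_all :: "nat \<Rightarrow> ('k::field) fa set" where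
  "W_all p = (\<Union>m\<in>{1..}. W_set p m)"

definition W' :: "nat \<Rightarrow> ('k::field) fa set" where
  "W' p = {fa_one} \<union> W_all p"

end

theory Submission
  imports Defs
begin
type_synonym 'k vec = "(nat \<Rightarrow> nat) \<times> nat set \<Rightarrow> 'k"

definition lin :: "('k::field vec \<Rightarrow> 'k vec) \<Rightarrow> bool" where
 "lin F \<longleftrightarrow> (\<forall>u v. F (\<lambda>b. u b + v b) = (\<lambda>b. F u b + F v b)) \<and> (\<forall>c u. F (\<lambda>b. c * u b) = (\<lambda>b. c * F u b))"

lemma linD1: "lin F \<Longrightarrow> F (\<lambda>b. u b + v b) = (\<lambda>b. F u b + F v b)" by (simp add: lin_def)
lemma linD2: "lin F \<Longrightarrow> F (\<lambda>b. c * u b) = (\<lambda>b. c * F u b)" by (simp add: lin_def)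
lemma lin_zero: "lin F \<Longrightarrow> F (\<lambda>b. 0) = (\<lambda>b. 0)"
  using linD2[of F 0 "\<lambda>b. 0"] by simp
lemma lin_neg: "lin F \<Longrightarrow> F (\<lambda>b. - u b) = (\<lambda>b. - F u b)"
  using linD2[of F "-1" u] by simp
lemma lin_diff: "lin F \<Longrightarrow> F (\<lambda>b. u b - v b) = (\<lambda>b. F u b - F v b)"
  using linD1[of F u "\<lambda>b. - v b"] lin_neg[of F v] by simp

typedef (overloaded) 'k op = "{F :: 'k::field vec \<Rightarrow> 'k vec. lin F}" morphisms Rep Abs
  by (rule exI[of _ id]) (auto simp: lin_def)

setup_lifting type_definition_op

instantiation op :: (field) ring_1 begin
lift_definition zero_op :: "'a op" is "\<lambda>v b. 0" by (simp add: lin_def)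
lift_definition one_op :: "'a op" is "\<lambda>v. v" by (simp add: lin_def)
lift_definition plus_op :: "'a op \<Rightarrow> 'a op \<Rightarrow> 'a op" is "\<lambda>F G v b. F v b + G v b"
  by (simp add: lin_def algebra_simps)
lift_definition uminus_op :: "'a op \<Rightarrow> 'a op" is "\<lambda>F v b. - F v b"
  by (simp add: lin_def algebra_simps)
lift_definition minus_op :: "'a op \<Rightarrow> 'a op \<Rightarrow> 'a op" is "\<lambda>F G v b. F v b - G v b"
  by (simp add: lin_def algebra_simps)
lift_definition times_op :: "'a op \<Rightarrow> 'a op \<Rightarrow> 'a op" is "\<lambda>F G v. F (G v)"
  by (simp add: lin_def)
instance
proof
  fix a b c :: "'a op"
  show "a + b + c = a + (b + c)" by transfer (simp add: algebra_simps)
  show "a + b = b + a" by transfer (simp add: algebra_simps)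
  show "0 + a = a" by transfer simp
  show "- a + a = 0" by transfer simp
  show "a - b = a + - b" by transfer simp
  show "a * b * c = a * (b * c)" by transfer simp
  show "1 * a = a" by transfer simp
  show "a * 1 = a" by transfer simp
  show "(a + b) * c = a * c + b * c" by transfer simp
  show "a * (b + c) = a * b + a * c" by transfer (simp add: linD1)
  show "(0::'a op) \<noteq> 1"
  proof
    assume h: "(0::'a op) = 1"
    have "Rep (0::'a op) (\<lambda>b. 1) undefined = Rep (1::'a op) (\<lambda>b. 1) undefined" by (simp only: h)
    moreover have "Rep (0::'a op) (\<lambda>b. 1) undefined = 0" by transfer simp
    moreover have "Rep (1::'a op) (\<lambda>b. 1) undefined = 1" by transfer simp
    ultimately show False by simp
  qed
qed
end

lemma Rep_plus: "Rep (X + Y) v = (\<lambda>b. Rep X v b + Rep Y v b)" by transfer simp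
lemma Rep_minus: "Rep (X - Y) v = (\<lambda>b. Rep X v b - Rep Y v b)" by transfer simp
lemma Rep_uminus: "Rep (- X) v = (\<lambda>b. - Rep X v b)" by transfer simp
lemma Rep_times: "Rep (X * Y) v = Rep X (Rep Y v)" by transfer simp
lemma Rep_one: "Rep 1 v = v" by transfer simp
lemma Rep_zero: "Rep 0 v = (\<lambda>b. 0)" by transfer simp
lemma Rep_lin: "lin (Rep X)" using Rep by auto
lemma Rep_0v: "Rep X (\<lambda>b. 0) = (\<lambda>b. 0)" using lin_zero[OF Rep_lin] .
lemma Rep_addv: "Rep X (\<lambda>b. u b + v b) = (\<lambda>b. Rep X u b + Rep X v b)" using linD1[OF Rep_lin] .
lemma Rep_smultv: "Rep X (\<lambda>b. c * u b) = (\<lambda>b. c * Rep X u b)" using linD2[OF Rep_lin] .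

lemma op_eqI: "(\<And>v b. Rep X v b = Rep Y v b) \<Longrightarrow> X = Y"
  by (metis Rep_inject ext)

lift_definition sc :: "'k::field \<Rightarrow> 'k op" is "\<lambda>c v b. c * v b"
  by (simp add: lin_def algebra_simps)

lemma Rep_sc: "Rep (sc c) v = (\<lambda>b. c * v b)" by transfer simp
lemma sc_comm: "sc c * X = X * sc c"
  by (rule op_eqI) (simp add: Rep_times Rep_sc Rep_smultv)
lemma sc_mult: "sc a * sc b = sc (a * b)" by (rule op_eqI) (simp add: Rep_times Rep_sc)
lemma sc_add: "sc (a + b) = sc a + sc b" by (rule op_eqI) (simp add: Rep_plus Rep_sc algebra_simps)
lemma sc_one: "sc 1 = 1" by (rule op_eqI) (simp add: Rep_one Rep_sc)
lemma sc_zero: "sc 0 = 0" by (rule op_eqI) (simp add: Rep_zero Rep_sc)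
lemma sc_of_nat: "sc (of_nat n) = of_nat n"
  by (induction n) (simp_all add: sc_zero sc_add sc_one)
lemma of_nat_op_comm: "(of_nat n :: 'k::field op) * X = X * of_nat n"
  by (metis sc_of_nat sc_comm)

definition eps :: "nat \<Rightarrow> nat set \<Rightarrow> 'k::field" where
  "eps i S = (-1) ^ card {j\<in>S. j < i}"

lift_definition Tm :: "nat \<Rightarrow> 'k::field op" is
  "\<lambda>i v (a, S). if 0 < a i then v (a(i := a i - 1), S) else 0"
  by (auto simp: lin_def fun_eq_iff)

lift_definition Dx :: "nat \<Rightarrow> 'k::field op" is
  "\<lambda>i v (a, S). if finite S \<and> i \<in> S then eps i S * v (a, S - {i}) else 0"
  by (auto simp: lin_def fun_eq_iff algebra_simps)

lift_definition Pr :: "'k::field op" is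
  "\<lambda>v (a, S). (-1) ^ card S * v (a, S)"
  by (auto simp: lin_def fun_eq_iff algebra_simps)

lift_definition dd :: "'k::field op" is
  "\<lambda>v (a, S). if finite S then (\<Sum>j\<in>S. eps j S * of_nat (a j + 1) * v (a(j := a j + 1), S - {j})) else 0"
  by (auto simp: lin_def fun_eq_iff algebra_simps sum.distrib sum_distrib_left)

lemma Rep_Tm: "Rep (Tm i) v (a, S) = (if 0 < a i then v (a(i := a i - 1), S) else 0)"
  by transfer simp
lemma Rep_Dx: "Rep (Dx i) v (a, S) = (if finite S \<and> i \<in> S then eps i S * v (a, S - {i}) else 0)"
  by transfer simp
lemma Rep_Pr: "Rep Pr v (a, S) = (-1) ^ card S * v (a, S)"
  by transfer simp
lemma Rep_dd: "Rep dd v (a, S) = (if finite S then (\<Sum>j\<in>S. eps j S * of_nat (a j + 1) * v (a(j := a j + 1), S - {j})) else 0)"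
  by transfer simp

lemma op_eqI2: "(\<And>v a S. Rep X v (a, S) = Rep Y v (a, S)) \<Longrightarrow> X = Y"
  by (rule op_eqI) (metis surj_pair)

lemma eps_remove_less:
  assumes "finite S" "i \<in> S" "i < j"
  shows "eps j S = - (eps j (S - {i}) :: 'k::field)"
proof -
  have "{l\<in>S. l < j} = insert i {l\<in>S - {i}. l < j}" using assms by auto
  moreover have "i \<notin> {l\<in>S - {i}. l < j}" by auto
  moreover have "finite {l\<in>S - {i}. l < j}" using assms by auto
  ultimately show ?thesis unfolding eps_def by simp
qed

lemma eps_remove_greater:
  assumes "j < i"
  shows "eps j S = (eps j (S - {i}) :: 'k::field)"
proof -
  have "{l\<in>S. l < j} = {l\<in>S - {i}. l < j}" using assms by auto
  thus ?thesis unfolding eps_def by simp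
qed

lemma eps_sq: "eps i S * eps i S = (1::'k::field)"
  unfolding eps_def by (simp add: power_mult_distrib[symmetric])

lemma Tm_comm: "Tm i * Tm j = Tm j * Tm i"
  by (rule op_eqI2) (auto simp: Rep_times Rep_Tm fun_upd_twist)

lemma Tm_Dx: "Tm i * Dx j = Dx j * Tm i"
  by (rule op_eqI2) (auto simp: Rep_times Rep_Tm Rep_Dx)

lemma Dx_Dx_same: "Dx i * Dx i = 0"
  by (rule op_eqI2) (auto simp: Rep_times Rep_Dx Rep_zero)

lemma Dx_anti: "Dx i * Dx j = - (Dx j * Dx i)"
proof (cases "i = j")
  case True thus ?thesis by (simp add: Dx_Dx_same)
next
  case False
  show ?thesis
  proof (rule op_eqI2)
    fix v a S
    show "Rep (Dx i * Dx j) v (a, S) = Rep (- (Dx j * Dx i)) v (a, S)"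
    proof (cases "finite S \<and> i \<in> S \<and> j \<in> S")
      case True
      have e: "S - {j} - {i} = S - {i} - {j}" by auto
      show ?thesis
      proof (cases "i < j")
        case True
        with \<open>finite S \<and> i \<in> S \<and> j \<in> S\<close> have "eps j S = - (eps j (S - {i}) :: 'b)"
          by (intro eps_remove_less) auto
        moreover have "eps i S = (eps i (S - {j}) :: 'b)" using True by (intro eps_remove_greater)
        ultimately show ?thesis using \<open>finite S \<and> i \<in> S \<and> j \<in> S\<close> \<open>i \<noteq> j\<close>
          by (auto simp: Rep_times Rep_Dx Rep_uminus e)
      next
        case False
        hence "j < i" using \<open>i \<noteq> j\<close> by simp
        with \<open>finite S \<and> i \<in> S \<and> j \<in> S\<close> have "eps i S = - (eps i (S - {j}) :: 'b)"
          by (intro eps_remove_less) auto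
        moreover have "eps j S = (eps j (S - {i}) :: 'b)" using \<open>j < i\<close> by (intro eps_remove_greater)
        ultimately show ?thesis using \<open>finite S \<and> i \<in> S \<and> j \<in> S\<close> \<open>i \<noteq> j\<close>
          by (auto simp: Rep_times Rep_Dx Rep_uminus e)
      qed
    next
      case False
      thus ?thesis by (auto simp: Rep_times Rep_Dx Rep_uminus)
    qed
  qed
qed

lemma Pr_Pr: "Pr * Pr = 1"
  by (rule op_eqI2) (simp add: Rep_times Rep_Pr Rep_one power_mult_distrib[symmetric])

lemma Pr_Tm: "Pr * Tm i = Tm i * Pr"
  by (rule op_eqI2) (simp add: Rep_times Rep_Pr Rep_Tm)

lemma Pr_Dx: "Pr * Dx i = - (Dx i * Pr)"
proof (rule op_eqI2)
  fix v a S
  show "Rep (Pr * Dx i) v (a, S) = Rep (- (Dx i * Pr)) v (a, S)"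
  proof (cases "finite S \<and> i \<in> S")
    case True
    hence "card S > 0" by (auto simp: card_gt_0_iff)
    then obtain m where m: "card S = Suc m" by (cases "card S") auto
    hence "card (S - {i}) = m" using True by simp
    thus ?thesis using True m by (simp add: Rep_times Rep_Pr Rep_Dx Rep_uminus)
  next
    case False thus ?thesis by (auto simp: Rep_times Rep_Pr Rep_Dx Rep_uminus)
  qed
qed

lemma Pr_dd: "Pr * dd = - (dd * Pr)"
proof (rule op_eqI2)
  fix v a S
  show "Rep (Pr * dd) v (a, S) = Rep (- (dd * Pr)) v (a, S)"
  proof (cases "finite S")
    case True
    have "(\<Sum>j\<in>S. eps j S * of_nat (a j + 1) * ((-1) ^ card (S - {j}) * v (a(j := a j + 1), S - {j})))
        = (\<Sum>j\<in>S. - ((-1) ^ card S * (eps j S * of_nat (a j + 1) * v (a(j := a j + 1), S - {j}))))"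
    proof (rule sum.cong)
      fix j assume "j \<in> S"
      hence "card S = Suc (card (S - {j}))" using True by (intro card_Suc_Diff1[symmetric]) auto
      thus "eps j S * of_nat (a j + 1) * ((-1) ^ card (S - {j}) * v (a(j := a j + 1), S - {j})) =
         - ((-1) ^ card S * (eps j S * of_nat (a j + 1) * v (a(j := a j + 1), S - {j})))" by simp
    qed simp
    thus ?thesis using True
      by (simp add: Rep_times Rep_Pr Rep_dd Rep_uminus sum_distrib_left sum_negf)
  next
    case False thus ?thesis by (simp add: Rep_times Rep_Pr Rep_dd Rep_uminus)
  qed
qed

lemma dd_Tm: "dd * Tm i - Tm i * dd = Dx i"
proof (rule op_eqI2)
  fix v :: "'a::field vec" and a S
  define T1 where "T1 j = eps j S * of_nat (a j + 1) * (if 0 < (a(j := a j + 1)) i then v ((a(j := a j + 1))(i := (a(j := a j + 1)) i - 1), S - {j}) else 0)" for j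
  define T2 where "T2 j = (if 0 < a i then eps j S * of_nat ((a(i := a i - 1)) j + 1) * v ((a(i := a i - 1))(j := (a(i := a i - 1)) j + 1), S - {j}) else (0::'a))" for j
  have pt: "T1 j - T2 j = (if j = i then eps i S * v (a, S - {i}) else 0)" for j
  proof (cases "j = i")
    case True
    show ?thesis
    proof (cases "0 < a i")
      case True
      hence "a i - 1 + 1 = a i" by simp
      thus ?thesis using \<open>j = i\<close> True unfolding T1_def T2_def by (simp add: algebra_simps)
    next
      case False
      hence "a(i := 0) = a" by auto
      thus ?thesis using False \<open>j = i\<close> unfolding T1_def T2_def by simp
    qed
  next
    case False
    thus ?thesis unfolding T1_def T2_def by (auto simp: fun_upd_twist)
  qed
  show "Rep (dd * Tm i - Tm i * dd) v (a, S) = Rep (Dx i) v (a, S)"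
  proof (cases "finite S")
    case True
    have "Rep (dd * Tm i - Tm i * dd) v (a, S) = (\<Sum>j\<in>S. T1 j) - (\<Sum>j\<in>S. T2 j)"
      using True unfolding T1_def T2_def
      by (simp add: Rep_minus Rep_times Rep_dd Rep_Tm sum_distrib_left if_distrib[of "\<lambda>x. x * _"] cong: if_cong)
    also have "\<dots> = (\<Sum>j\<in>S. T1 j - T2 j)" by (simp add: sum_subtractf)
    also have "\<dots> = (\<Sum>j\<in>S. if j = i then eps i S * v (a, S - {i}) else 0)" by (simp add: pt)
    also have "\<dots> = Rep (Dx i) v (a, S)" using True by (simp add: Rep_Dx)
    finally show ?thesis .
  next
    case False
    thus ?thesis by (simp add: Rep_minus Rep_times Rep_dd Rep_Tm Rep_Dx)
  qed
qed

lemma eps_swap: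
  assumes "finite S" "i \<in> S" "j \<in> S" "i \<noteq> j"
  shows "eps j S * eps i (S - {j}) = - (eps i S * (eps j (S - {i}) :: 'k::field))"
proof (cases "i < j")
  case True
  hence "eps j S = - (eps j (S - {i}) :: 'k)" using assms by (intro eps_remove_less) auto
  moreover have "eps i S = (eps i (S - {j}) :: 'k)" using True by (intro eps_remove_greater)
  ultimately show ?thesis by simp
next
  case False
  hence "j < i" using assms by simp
  hence "eps i S = - (eps i (S - {j}) :: 'k)" using assms by (intro eps_remove_less) auto
  moreover have "eps j S = (eps j (S - {i}) :: 'k)" using \<open>j < i\<close> by (intro eps_remove_greater)
  ultimately show ?thesis by simp
qed

lemma dd_Dx: "dd * Dx i + Dx i * dd = 0"
proof (rule op_eqI2)
  fix v :: "'a::field vec" and a S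
  show "Rep (dd * Dx i + Dx i * dd) v (a, S) = Rep 0 v (a, S)"
  proof (cases "finite S \<and> i \<in> S")
    case True
    hence fS: "finite S" and iS: "i \<in> S" by auto
    define c where "c j = (of_nat (a j + 1) :: 'a)" for j
    have e1: "(\<Sum>j\<in>S. eps j S * c j * (if finite (S - {j}) \<and> i \<in> S - {j} then eps i (S - {j}) * v (a(j := a j + 1), S - {j} - {i}) else 0))
       = (\<Sum>j\<in>S - {i}. eps j S * eps i (S - {j}) * c j * v (a(j := a j + 1), S - {i} - {j}))"
    proof -
      have "(\<Sum>j\<in>S. eps j S * c j * (if finite (S - {j}) \<and> i \<in> S - {j} then eps i (S - {j}) * v (a(j := a j + 1), S - {j} - {i}) else 0))
         = (\<Sum>j\<in>S - {i}. eps j S * c j * (if finite (S - {j}) \<and> i \<in> S - {j} then eps i (S - {j}) * v (a(j := a j + 1), S - {j} - {i}) else 0))"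
        using fS iS by (simp add: sum.remove)
      also have "\<dots> = (\<Sum>j\<in>S - {i}. eps j S * eps i (S - {j}) * c j * v (a(j := a j + 1), S - {i} - {j}))"
        using fS iS by (intro sum.cong) (auto simp: Diff_insert2[symmetric] insert_commute)
      finally show ?thesis .
    qed
    have e2: "(\<Sum>j\<in>S - {i}. eps j S * eps i (S - {j}) * c j * v (a(j := a j + 1), S - {i} - {j}))
       = - (eps i S * (\<Sum>j\<in>S - {i}. eps j (S - {i}) * c j * v (a(j := a j + 1), S - {i} - {j})))"
    proof -
      have "(\<Sum>j\<in>S - {i}. eps j S * eps i (S - {j}) * c j * v (a(j := a j + 1), S - {i} - {j}))
        = (\<Sum>j\<in>S - {i}. - (eps i S * (eps j (S - {i}) * c j * v (a(j := a j + 1), S - {i} - {j}))))"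
      proof (rule sum.cong)
        fix j assume "j \<in> S - {i}"
        hence "eps j S * eps i (S - {j}) = - (eps i S * (eps j (S - {i}) :: 'a))"
          using fS iS by (intro eps_swap) auto
        thus "eps j S * eps i (S - {j}) * c j * v (a(j := a j + 1), S - {i} - {j}) =
          - (eps i S * (eps j (S - {i}) * c j * v (a(j := a j + 1), S - {i} - {j})))"
          by (metis (no_types, lifting) minus_mult_left mult.assoc)
      qed simp
      thus ?thesis by (simp add: sum_distrib_left sum_negf)
    qed
    have "Rep (dd * Dx i + Dx i * dd) v (a, S) = (\<Sum>j\<in>S. eps j S * c j * (if finite (S - {j}) \<and> i \<in> S - {j} then eps i (S - {j}) * v (a(j := a j + 1), S - {j} - {i}) else 0))
       + eps i S * (\<Sum>j\<in>S - {i}. eps j (S - {i}) * c j * v (a(j := a j + 1), S - {i} - {j}))"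
      using True by (simp add: Rep_plus Rep_times Rep_dd Rep_Dx c_def cong del: if_weak_cong)
    also have "\<dots> = 0" unfolding e1 e2 by simp
    finally show ?thesis by (simp add: Rep_zero)
  next
    case False
    thus ?thesis
      by (auto simp: Rep_plus Rep_times Rep_dd Rep_Dx Rep_zero intro!: sum.neutral)
  qed
qed

definition sig :: "'k::field op \<Rightarrow> 'k op" where "sig X = Pr * X * Pr"
definition D :: "'k::field op \<Rightarrow> 'k op" where "D X = dd * X - Pr * X * Pr * dd"

lemma D_add: "D (X + Y) = D X + D Y" unfolding D_def by (simp add: algebra_simps)
lemma D_diff: "D (X - Y) = D X - D Y" unfolding D_def by (simp add: algebra_simps)
lemma D_uminus: "D (- X) = - D X" unfolding D_def by (simp add: algebra_simps)
lemma D_zero: "D 0 = 0" unfolding D_def by simp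
lemma sig_add: "sig (X + Y) = sig X + sig Y" unfolding sig_def by (simp add: algebra_simps)
lemma sig_uminus: "sig (- X) = - sig X" unfolding sig_def by (simp add: algebra_simps)
lemma sig_mult: "sig (X * Y) = sig X * sig Y"
proof -
  have "Pr * (X * Y) * Pr = Pr * X * (Pr * Pr) * Y * Pr" by (simp add: Pr_Pr mult.assoc)
  thus ?thesis unfolding sig_def by (simp add: mult.assoc)
qed
lemma sig_sig: "sig (sig X) = X"
  unfolding sig_def by (simp add: mult.assoc Pr_Pr) (simp add: mult.assoc[symmetric] Pr_Pr)

lemma D_mult: "D (X * Y) = D X * Y + sig X * D Y"
proof -
  have "Pr * X * Pr * (Pr * Y * Pr * dd) = Pr * X * (Pr * Pr) * Y * Pr * dd" by (simp add: mult.assoc)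
  hence "Pr * X * Pr * (Pr * Y * Pr * dd) = Pr * X * Y * Pr * dd" by (simp add: Pr_Pr)
  thus ?thesis unfolding D_def sig_def by (simp add: algebra_simps)
qed

lemma Pr_Pr': "Pr * (Pr * Z) = Z" by (simp add: mult.assoc[symmetric] Pr_Pr)
lemma Pr_dd': "Pr * (dd * Z) = - (dd * (Pr * Z))" by (simp add: mult.assoc[symmetric] Pr_dd)
lemma Pr_Dx': "Pr * (Dx i * Z) = - (Dx i * (Pr * Z))" by (simp add: mult.assoc[symmetric] Pr_Dx)
lemma Pr_Tm': "Pr * (Tm i * Z) = Tm i * (Pr * Z)" by (simp add: mult.assoc[symmetric] Pr_Tm)
lemmas pr_simps = Pr_Pr Pr_Pr' Pr_dd Pr_dd' Pr_Dx Pr_Dx' Pr_Tm Pr_Tm' mult.assoc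

lemma sig_D: "sig (D X) = - D (sig X)"
  unfolding D_def sig_def by (simp add: algebra_simps pr_simps)

lemma sc_D: "D (sc c) = 0" unfolding D_def by (simp add: sc_comm mult.assoc[symmetric] Pr_Pr)
     (metis sc_comm mult.assoc Pr_Pr mult_1_right)
lemma sig_sc: "sig (sc c) = sc c" unfolding sig_def by (metis sc_comm mult.assoc Pr_Pr mult_1_right)
lemma D_Tm: "D (Tm i) = Dx i"
  unfolding D_def using dd_Tm[of i] by (simp add: Pr_Tm mult.assoc) (simp add: mult.assoc[symmetric] Pr_Pr)
lemma D_Dx: "D (Dx i) = 0"
  unfolding D_def using dd_Dx[of i] by (simp add: algebra_simps pr_simps)
lemma sig_Tm: "sig (Tm i) = Tm i" unfolding sig_def by (simp add: Pr_Tm mult.assoc Pr_Pr)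
lemma sig_Dx: "sig (Dx i) = - Dx i" unfolding sig_def by (simp add: Pr_Dx mult.assoc Pr_Pr)

lemma D_sc_mult: "D (sc c * X) = sc c * D X"
  by (simp add: D_mult sc_D sig_sc)

inductive_set Ev :: "'k::field op set" and Od :: "'k op set" where
  ev_sc: "sc c \<in> Ev"
| ev_Tm: "Tm i \<in> Ev"
| od_Dx: "Dx i \<in> Od"
| ev_add: "a \<in> Ev \<Longrightarrow> b \<in> Ev \<Longrightarrow> a + b \<in> Ev"
| od_add: "a \<in> Od \<Longrightarrow> b \<in> Od \<Longrightarrow> a + b \<in> Od"
| ev_mult: "a \<in> Ev \<Longrightarrow> b \<in> Ev \<Longrightarrow> a * b \<in> Ev"
| ev_mult_od: "a \<in> Od \<Longrightarrow> b \<in> Od \<Longrightarrow> a * b \<in> Ev"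
| od_mult1: "a \<in> Ev \<Longrightarrow> b \<in> Od \<Longrightarrow> a * b \<in> Od"
| od_mult2: "a \<in> Od \<Longrightarrow> b \<in> Ev \<Longrightarrow> a * b \<in> Od"

lemma ev_zero: "0 \<in> Ev" using ev_sc[of 0] by (simp add: sc_zero)
lemma ev_one: "1 \<in> Ev" using ev_sc[of 1] by (simp add: sc_one)
lemma od_zero: "0 \<in> Od" using od_mult1[OF ev_zero od_Dx] by simp
lemma sc_neg1: "sc (-1) * X = - X" by (rule op_eqI) (simp add: Rep_times Rep_sc Rep_uminus)
lemma ev_uminus: "a \<in> Ev \<Longrightarrow> - a \<in> Ev" using ev_mult[OF ev_sc[of "-1"]] by (simp add: sc_neg1)
lemma od_uminus: "a \<in> Od \<Longrightarrow> - a \<in> Od" using od_mult1[OF ev_sc[of "-1"]] by (simp add: sc_neg1)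
lemma ev_diff: assumes "a \<in> Ev" "b \<in> Ev" shows "a - b \<in> Ev"
proof -
  have "a + - b \<in> Ev" using assms by (intro ev_add ev_uminus)
  thus ?thesis by simp
qed

lemma od_diff: assumes "a \<in> Od" "b \<in> Od" shows "a - b \<in> Od"
proof -
  have "a + - b \<in> Od" using assms by (intro od_add od_uminus)
  thus ?thesis by simp
qed

lemma cc: "y*a = a*y \<Longrightarrow> y*b = b*y \<Longrightarrow> y*(a*b) = (a*b)*(y::'a::ring)"
proof - assume h: "y*a = a*y" "y*b = b*y"
  have "y*(a*b) = (y*a)*b" by (simp add: mult.assoc)
  also have "\<dots> = a*(y*b)" by (simp add: h mult.assoc)
  also have "\<dots> = (a*b)*y" by (simp add: h mult.assoc)
  finally show ?thesis . qed
lemma ca: "y*a = a*y \<Longrightarrow> y*b = -(b*y) \<Longrightarrow> y*(a*b) = -((a*b)*(y::'a::ring))"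
proof - assume h: "y*a = a*y" "y*b = -(b*y)"
  have "y*(a*b) = (y*a)*b" by (simp add: mult.assoc)
  also have "\<dots> = a*(y*b)" by (simp add: h mult.assoc)
  also have "\<dots> = -((a*b)*y)" by (simp add: h mult.assoc)
  finally show ?thesis . qed
lemma ac: "y*a = -(a*y) \<Longrightarrow> y*b = b*y \<Longrightarrow> y*(a*b) = -((a*b)*(y::'a::ring))"
proof - assume h: "y*a = -(a*y)" "y*b = b*y"
  have "y*(a*b) = (y*a)*b" by (simp add: mult.assoc)
  also have "\<dots> = - (a*(y*b))" by (simp add: h mult.assoc)
  also have "\<dots> = -((a*b)*y)" by (simp add: h mult.assoc)
  finally show ?thesis . qed
lemma aa: "y*a = -(a*y) \<Longrightarrow> y*b = -(b*y) \<Longrightarrow> y*(a*b) = (a*b)*(y::'a::ring)"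
proof - assume h: "y*a = -(a*y)" "y*b = -(b*y)"
  have "y*(a*b) = (y*a)*b" by (simp add: mult.assoc)
  also have "\<dots> = - (a*(y*b))" by (simp add: h mult.assoc)
  also have "\<dots> = (a*b)*y" by (simp add: h mult.assoc)
  finally show ?thesis . qed
lemma cs: "y*a = a*y \<Longrightarrow> y*b = b*y \<Longrightarrow> y*(a+b) = (a+b)*(y::'a::ring)"
  by (simp add: algebra_simps)
lemma as: "y*a = -(a*y) \<Longrightarrow> y*b = -(b*y) \<Longrightarrow> y*(a+b) = -((a+b)*(y::'a::ring))"
  by (simp add: algebra_simps)

lemma Tm_comm_EO: "(x::'k::field op) \<in> Ev \<Longrightarrow> Tm i * x = x * Tm i" "(y::'k op) \<in> Od \<Longrightarrow> Tm i * y = y * Tm i"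
proof (induct x and y rule: Ev_Od.inducts)
  case (ev_sc c) show ?case by (simp add: sc_comm)
next case (ev_Tm j) show ?case by (simp add: Tm_comm)
next case (od_Dx j) show ?case by (simp add: Tm_Dx)
next case (ev_add a b) show ?case by (rule cs[OF ev_add(2) ev_add(4)])
next case (od_add a b) show ?case by (rule cs[OF od_add(2) od_add(4)])
next case (ev_mult a b) show ?case by (rule cc[OF ev_mult(2) ev_mult(4)])
next case (ev_mult_od a b) show ?case by (rule cc[OF ev_mult_od(2) ev_mult_od(4)])
next case (od_mult1 a b) show ?case by (rule cc[OF od_mult1(2) od_mult1(4)])
next case (od_mult2 a b) show ?case by (rule cc[OF od_mult2(2) od_mult2(4)])
qed

lemma Dx_comm_EO: "(x::'k::field op) \<in> Ev \<Longrightarrow> Dx i * x = x * Dx i" "(y::'k op) \<in> Od \<Longrightarrow> Dx i * y = - (y * Dx i)"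
proof (induct x and y rule: Ev_Od.inducts)
  case (ev_sc c) show ?case by (simp add: sc_comm)
next case (ev_Tm j) show ?case by (simp add: Tm_Dx)
next case (od_Dx j) show ?case by (rule Dx_anti)
next case (ev_add a b) show ?case by (rule cs[OF ev_add(2) ev_add(4)])
next case (od_add a b) show ?case by (rule as[OF od_add(2) od_add(4)])
next case (ev_mult a b) show ?case by (rule cc[OF ev_mult(2) ev_mult(4)])
next case (ev_mult_od a b) show ?case by (rule aa[OF ev_mult_od(2) ev_mult_od(4)])
next case (od_mult1 a b) show ?case by (rule ca[OF od_mult1(2) od_mult1(4)])
next case (od_mult2 a b) show ?case by (rule ac[OF od_mult2(2) od_mult2(4)])
qed

lemma comm_Ev_y: assumes "y \<in> Ev"
  shows "(x::'k::field op) \<in> Ev \<Longrightarrow> y * x = x * y" "(z::'k op) \<in> Od \<Longrightarrow> y * z = z * y"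
proof (induct x and z rule: Ev_Od.inducts)
  case (ev_sc c) show ?case by (simp add: sc_comm)
next case (ev_Tm j) show ?case using Tm_comm_EO(1)[OF assms] by simp
next case (od_Dx j) show ?case using Dx_comm_EO(1)[OF assms] by simp
next case (ev_add a b) show ?case by (rule cs[OF ev_add(2) ev_add(4)])
next case (od_add a b) show ?case by (rule cs[OF od_add(2) od_add(4)])
next case (ev_mult a b) show ?case by (rule cc[OF ev_mult(2) ev_mult(4)])
next case (ev_mult_od a b) show ?case by (rule cc[OF ev_mult_od(2) ev_mult_od(4)])
next case (od_mult1 a b) show ?case by (rule cc[OF od_mult1(2) od_mult1(4)])
next case (od_mult2 a b) show ?case by (rule cc[OF od_mult2(2) od_mult2(4)])
qed

lemma comm_Od_y: assumes "y \<in> Od"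
  shows "(x::'k::field op) \<in> Ev \<Longrightarrow> y * x = x * y" "(z::'k op) \<in> Od \<Longrightarrow> y * z = - (z * y)"
proof (induct x and z rule: Ev_Od.inducts)
  case (ev_sc c) show ?case by (simp add: sc_comm)
next case (ev_Tm j) show ?case using Tm_comm_EO(2)[OF assms] by simp
next case (od_Dx j) show ?case using Dx_comm_EO(2)[OF assms] by (simp add: minus_equation_iff)
next case (ev_add a b) show ?case by (rule cs[OF ev_add(2) ev_add(4)])
next case (od_add a b) show ?case by (rule as[OF od_add(2) od_add(4)])
next case (ev_mult a b) show ?case by (rule cc[OF ev_mult(2) ev_mult(4)])
next case (ev_mult_od a b) show ?case by (rule aa[OF ev_mult_od(2) ev_mult_od(4)])
next case (od_mult1 a b) show ?case by (rule ca[OF od_mult1(2) od_mult1(4)])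
next case (od_mult2 a b) show ?case by (rule ac[OF od_mult2(2) od_mult2(4)])
qed

lemma ev_comm: "a \<in> Ev \<Longrightarrow> y \<in> Ev \<Longrightarrow> a * y = y * a" using comm_Ev_y(1) by blast
lemma ev_comm_od: "a \<in> Ev \<Longrightarrow> y \<in> Od \<Longrightarrow> a * y = y * a" using comm_Ev_y(2) by blast
lemma od_anti: "a \<in> Od \<Longrightarrow> y \<in> Od \<Longrightarrow> a * y = - (y * a)" using comm_Od_y(2) by blast

lemma self_neg: assumes h: "(x::'a::ab_group_add) = - x" shows "x + x = 0"
proof -
  have "x + x = x + - x" using h by (rule arg_cong[where f="\<lambda>t. x + t"])
  thus ?thesis by simp
qed

lemma sc_two: "sc (2::'k::field) = 1 + 1"
proof -
  have "sc (2::'k) = sc (1 + 1)" by simp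
  also have "\<dots> = 1 + 1" by (simp only: sc_add sc_one)
  finally show ?thesis .
qed

lemma sc_half: assumes "(2::'k::field) \<noteq> 0" and "X + X = (0::'k op)" shows "X = 0"
proof -
  have "sc 2 * X = X + X" by (simp only: sc_two distrib_right mult_1_left)
  hence "sc 2 * X = 0" using assms(2) by simp
  hence "sc (1/2) * (sc 2 * X) = 0" by simp
  thus ?thesis using assms(1) by (simp add: mult.assoc[symmetric] sc_mult sc_one)
qed

lemma od_sq: assumes "(2::'k::field) \<noteq> 0" "a \<in> (Od :: 'k op set)" shows "a * a = 0"
  using sc_half[OF assms(1) self_neg[OF od_anti[OF assms(2) assms(2)]]] .

lemma sig_EO: "(x::'k::field op) \<in> Ev \<Longrightarrow> sig x = x" "(z::'k op) \<in> Od \<Longrightarrow> sig z = - z"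
proof (induct x and z rule: Ev_Od.inducts)
  case (ev_sc c) show ?case by (simp add: sig_sc)
next case (ev_Tm j) show ?case by (simp add: sig_Tm)
next case (od_Dx j) show ?case by (simp add: sig_Dx)
qed (simp_all add: sig_add sig_mult)

lemma D_EO: "(x::'k::field op) \<in> Ev \<Longrightarrow> D x \<in> Od" "(z::'k op) \<in> Od \<Longrightarrow> D z \<in> Ev"
proof (induct x and z rule: Ev_Od.inducts)
  case (ev_sc c) show ?case by (simp add: sc_D od_zero)
next case (ev_Tm j) show ?case by (simp add: D_Tm od_Dx)
next case (od_Dx j) show ?case by (simp add: D_Dx ev_zero)
next case (ev_add a b) thus ?case by (simp add: D_add od_add)
next case (od_add a b) thus ?case by (simp add: D_add ev_add)
next case (ev_mult a b) thus ?case by (simp add: D_mult sig_EO od_add od_mult1 od_mult2)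
next case (ev_mult_od a b) thus ?case by (simp add: D_mult sig_EO od_diff od_mult1 od_mult2)
next case (od_mult1 a b) thus ?case by (simp add: D_mult sig_EO ev_add ev_mult ev_mult_od)
next case (od_mult2 a b) thus ?case by (simp add: D_mult sig_EO ev_diff ev_mult ev_mult_od)
qed

lemma D_sig: "D (sig X) = - sig (D X)" using sig_D[of X] by simp

lemma DD_EO: "(x::'k::field op) \<in> Ev \<Longrightarrow> D (D x) = 0" "(z::'k op) \<in> Od \<Longrightarrow> D (D z) = 0"
proof (induct x and z rule: Ev_Od.inducts)
  case (ev_sc c) show ?case by (simp add: sc_D D_zero)
next case (ev_Tm j) show ?case by (simp add: D_Tm D_Dx D_zero)
next case (od_Dx j) show ?case by (simp add: D_Dx D_zero)
qed (simp_all add: D_add D_mult D_sig sig_sig)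

inductive_set Pp :: "'k::field op set" where
  pp_sc: "sc c \<in> Pp"
| pp_Tm: "Tm i \<in> Pp"
| pp_add: "a \<in> Pp \<Longrightarrow> b \<in> Pp \<Longrightarrow> a + b \<in> Pp"
| pp_mult: "a \<in> Pp \<Longrightarrow> b \<in> Pp \<Longrightarrow> a * b \<in> Pp"

lemma Pp_Ev: "x \<in> Pp \<Longrightarrow> x \<in> Ev"
  by (induct rule: Pp.induct) (auto intro: Ev_Od.intros)

lemma pp_pow: "a \<in> Pp \<Longrightarrow> a ^ n \<in> Pp"
  by (induct n) (auto intro: pp_mult pp_sc[of 1, simplified sc_one])

definition Pj :: "nat \<Rightarrow> 'k::field vec \<Rightarrow> 'k vec" where
  "Pj s v = (\<lambda>(a, S). if card S = s then v (a, S) else 0)"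

definition hdeg :: "nat \<Rightarrow> 'k::field op \<Rightarrow> bool" where
  "hdeg q X \<longleftrightarrow> (\<forall>v a S. Rep X v (a, S) = (if q \<le> card S then Rep X (Pj (card S - q) v) (a, S) else 0))"

lemma Pj_Pj: "Pj s (Pj t v) = (if s = t then Pj t v else (\<lambda>b. 0))"
  by (auto simp: Pj_def fun_eq_iff)

lemma hdeg_supp:
  assumes "hdeg r Y"
  shows "Rep Y (Pj t v) (a, S) = (if card S = t + r then Rep Y (Pj t v) (a, S) else 0)"
proof -
  have h: "Rep Y (Pj t v) (a, S) = (if r \<le> card S then Rep Y (Pj (card S - r) (Pj t v)) (a, S) else 0)"
    using assms unfolding hdeg_def by blast
  show ?thesis
  proof (cases "card S = t + r")
    case False
    hence "\<not> (r \<le> card S) \<or> card S - r \<noteq> t" by auto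
    hence "(if r \<le> card S then Rep Y (Pj (card S - r) (Pj t v)) (a, S) else 0) = 0"
      by (auto simp: Pj_Pj Rep_0v)
    with h False show ?thesis by simp
  qed simp
qed

lemma Pj_Rep:
  assumes "hdeg r Y"
  shows "Pj s (Rep Y v) = (if r \<le> s then Rep Y (Pj (s - r) v) else (\<lambda>b. 0))"
proof (rule ext, clarify)
  fix a S
  have h: "Rep Y v (a, S) = (if r \<le> card S then Rep Y (Pj (card S - r) v) (a, S) else 0)"
    using assms unfolding hdeg_def by blast
  show "Pj s (Rep Y v) (a, S) = (if r \<le> s then Rep Y (Pj (s - r) v) else (\<lambda>b. 0)) (a, S)"
  proof (cases "r \<le> s")
    case True
    show ?thesis
    proof (cases "card S = s")
      case c: True
      have "Pj s (Rep Y v) (a, S) = Rep Y v (a, S)" using c by (simp add: Pj_def)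
      also have "\<dots> = Rep Y (Pj (s - r) v) (a, S)" using h c True by simp
      finally show ?thesis using True by simp
    next
      case c: False
      have "Pj s (Rep Y v) (a, S) = 0" using c by (simp add: Pj_def)
      moreover have "Rep Y (Pj (s - r) v) (a, S) = 0"
        using hdeg_supp[OF assms, of "s - r" v a S] c True by (simp split: if_split_asm)
      ultimately show ?thesis using True by simp
    qed
  next
    case False
    have "Pj s (Rep Y v) (a, S) = (if card S = s then Rep Y v (a, S) else 0)" by (simp add: Pj_def)
    also have "\<dots> = 0" using h False by auto
    finally show ?thesis using False by simp
  qed
qed

lemma hdeg_mult: assumes "hdeg q X" "hdeg r Y" shows "hdeg (q + r) (X * Y)"
  unfolding hdeg_def
proof (intro allI)
  fix v a S
  have "Rep (X * Y) v (a, S) = (if q \<le> card S then Rep X (Pj (card S - q) (Rep Y v)) (a, S) else 0)"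
    using assms(1) unfolding hdeg_def Rep_times by blast
  also have "\<dots> = (if q + r \<le> card S then Rep X (Rep Y (Pj (card S - (q + r)) v)) (a, S) else 0)"
    by (auto simp: Pj_Rep[OF assms(2)] Rep_0v diff_diff_add)
  also have "\<dots> = (if q + r \<le> card S then Rep (X * Y) (Pj (card S - (q + r)) v) (a, S) else 0)"
    by (simp add: Rep_times)
  finally show "Rep (X * Y) v (a, S) = (if q + r \<le> card S then Rep (X * Y) (Pj (card S - (q + r)) v) (a, S) else 0)" .
qed

lemma hdeg_add: assumes "hdeg q X" "hdeg q Y" shows "hdeg q (X + Y)"
  unfolding hdeg_def
proof (intro allI)
  fix v a S
  have x: "Rep X v (a, S) = (if q \<le> card S then Rep X (Pj (card S - q) v) (a, S) else 0)"
    using assms(1) unfolding hdeg_def by blast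
  have y: "Rep Y v (a, S) = (if q \<le> card S then Rep Y (Pj (card S - q) v) (a, S) else 0)"
    using assms(2) unfolding hdeg_def by blast
  show "Rep (X + Y) v (a, S) = (if q \<le> card S then Rep (X + Y) (Pj (card S - q) v) (a, S) else 0)"
    unfolding Rep_plus x y by simp
qed

lemma hdeg_zero: "hdeg q 0"
  unfolding hdeg_def by (simp add: Rep_zero)

lemma hdeg_sc: "hdeg 0 (sc c)"
  unfolding hdeg_def by (simp add: Rep_sc Pj_def)

lemma hdeg_Tm: "hdeg 0 (Tm i)"
  unfolding hdeg_def by (simp add: Rep_Tm Pj_def)

lemma hdeg_Dx: "hdeg 1 (Dx i :: 'k::field op)"
  unfolding hdeg_def
proof (intro allI)
  fix v :: "'k vec" and a :: "nat \<Rightarrow> nat" and S :: "nat set"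
  show "Rep (Dx i) v (a, S) = (if 1 \<le> card S then Rep (Dx i) (Pj (card S - 1) v) (a, S) else 0)"
  proof (cases "finite S \<and> i \<in> S")
    case True
    hence "card S \<ge> 1" by (auto simp: Suc_le_eq card_gt_0_iff)
    thus ?thesis using True by (simp add: Rep_Dx Pj_def)
  next
    case False
    hence "Rep (Dx i) w (a, S) = 0" for w :: "'k vec" by (auto simp: Rep_Dx)
    thus ?thesis by simp
  qed
qed

lemma Pp_hdeg: "x \<in> Pp \<Longrightarrow> hdeg 0 x"
proof (induct rule: Pp.induct)
  case (pp_mult a b) thus ?case using hdeg_mult[of 0 a 0 b] by simp
qed (auto intro: hdeg_sc hdeg_Tm hdeg_add)

lemma Pp_D_hdeg: "x \<in> Pp \<Longrightarrow> hdeg 1 (D x)"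
proof (induct rule: Pp.induct)
  case (pp_sc c) show ?case by (simp add: sc_D hdeg_zero)
next case (pp_Tm i) show ?case unfolding D_Tm by (rule hdeg_Dx)
next case (pp_add a b) thus ?case by (simp add: D_add hdeg_add)
next case (pp_mult a b)
  have "sig a = a" using pp_mult Pp_Ev sig_EO(1) by blast
  moreover have "hdeg (1 + 0) (D a * b)" using pp_mult Pp_hdeg by (intro hdeg_mult) auto
  moreover have "hdeg (0 + 1) (a * D b)" using pp_mult Pp_hdeg by (intro hdeg_mult) auto
  ultimately show ?case by (simp add: D_mult hdeg_add)
qed

definition vac :: "'k::field vec" where "vac = (\<lambda>b. if b = ((\<lambda>_. 0), {}) then 1 else 0)"

lemma hdeg_vac: fixes X :: "'k::field op" assumes "hdeg q X" "q \<noteq> card S0" shows "Rep X vac (a0, S0) = 0"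
proof -
  have "Rep X vac (a0, S0) = (if q \<le> card S0 then Rep X (Pj (card S0 - q) vac) (a0, S0) else 0)"
    using assms(1) unfolding hdeg_def by blast
  moreover have "q \<le> card S0 \<Longrightarrow> Pj (card S0 - q) (vac :: 'k vec) = (\<lambda>b. 0)"
    using assms(2) by (auto simp: Pj_def vac_def fun_eq_iff)
  ultimately show ?thesis by (cases "q \<le> card S0") (simp_all add: Rep_0v)
qed

lemma dd_vac: "Rep dd (vac :: 'k::field vec) = (\<lambda>b. 0)"
proof (rule ext, clarify)
  fix a :: "nat \<Rightarrow> nat" and S :: "nat set"
  have "a(j := a j + 1) \<noteq> (\<lambda>_. 0)" for j
  proof
    assume "a(j := a j + 1) = (\<lambda>_. 0)"
    hence "(a(j := a j + 1)) j = 0" by simp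
    thus False by simp
  qed
  thus "Rep dd vac (a, S) = 0" by (simp add: Rep_dd vac_def)
qed

lemma phi_D:
  assumes "finite S0" "\<forall>i\<in>S0. of_nat (a0 i + 1) = (0::'k::field)"
  shows "Rep (D Y) (vac :: 'k vec) (a0, S0) = 0"
  using assms by (simp add: D_def Rep_minus Rep_times dd_vac Rep_0v Rep_dd)

lemma ev_pow: "a \<in> Ev \<Longrightarrow> a ^ n \<in> Ev" by (induction n) (auto intro: ev_one ev_mult)
lemma ev_of_nat: "of_nat n \<in> Ev" using ev_sc[of "of_nat n"] by (simp add: sc_of_nat)

definition om :: "nat \<Rightarrow> 'k::field op \<Rightarrow> 'k op" where "om p a = a ^ (p - 1) * D a"

lemma pow_binom:
  fixes b m :: "'a::ring_1"
  assumes c: "b * m = m * b" and z: "m * m = 0"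
  shows "(b + m) ^ Suc k = b ^ Suc k + of_nat (Suc k) * b ^ k * m"
proof (induct k)
  case 0 show ?case by simp
next
  case (Suc k)
  have "(b + m) ^ Suc (Suc k) = (b ^ Suc k + of_nat (Suc k) * b ^ k * m) * (b + m)"
    by (simp only: power_Suc2[of "b+m" "Suc k"] Suc)
  also have "\<dots> = b ^ Suc k * b + of_nat (Suc k) * b ^ k * (m * b) + b ^ Suc k * m + of_nat (Suc k) * b ^ k * (m * m)"
    by (simp only: distrib_left distrib_right mult.assoc add.assoc)
  also have "\<dots> = b ^ Suc (Suc k) + of_nat (Suc k) * b ^ Suc k * m + b ^ Suc k * m"
    by (simp only: z c[symmetric] mult_zero_right add_0_right power_Suc2 mult.assoc)
  also have "\<dots> = b ^ Suc (Suc k) + of_nat (Suc (Suc k)) * b ^ Suc k * m"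
    by (simp add: algebra_simps)
  finally show ?case .
qed

lemma D_pow: assumes "x \<in> Ev" shows "D (x ^ Suc k) = of_nat (Suc k) * x ^ k * D x"
proof (induct k)
  case 0 show ?case by simp
next
  case (Suc k)
  have Dx: "D x \<in> Od" using D_EO(1)[OF assms] .
  have "D (x ^ Suc (Suc k)) = D (x * x ^ Suc k)" by simp
  also have "\<dots> = D x * x ^ Suc k + x * D (x ^ Suc k)"
    by (simp add: D_mult sig_EO(1)[OF assms])
  also have "D x * x ^ Suc k = x ^ Suc k * D x"
    by (rule sym[OF ev_comm_od[OF ev_pow[OF assms] Dx]])
  also have "x * D (x ^ Suc k) = of_nat (Suc k) * (x * x ^ k) * D x"
    by (simp only: Suc mult.assoc[symmetric] mult_of_nat_commute[of "Suc k" x])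
  finally show ?case by (simp add: algebra_simps)
qed

lemma ev_od_Dsq: assumes "(2::'k::field) \<noteq> 0" "m \<in> (Ev :: 'k op set)" "m * m = 0" shows "m * D m = 0"
proof -
  have Dm: "D m \<in> Od" using D_EO(1)[OF assms(2)] .
  have "0 = D (m * m)" by (simp add: assms(3) D_zero)
  also have "\<dots> = D m * m + m * D m" by (simp add: D_mult sig_EO(1)[OF assms(2)])
  also have "D m * m = m * D m" using ev_comm_od[OF assms(2) Dm] by simp
  finally have "m * D m + m * D m = 0" by simp
  thus ?thesis by (rule sc_half[OF assms(1)])
qed

lemma om_step:
  assumes two: "(2::'k::field) \<noteq> 0" and p: "2 \<le> p" and b: "b \<in> (Ev :: 'k op set)" and m: "m \<in> Ev" and z: "m * m = 0"
  shows "om p (b + m) = om p b + D (b ^ (p - 1) * m)"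
proof -
  define k where "k = p - 2"
  have k: "p - 1 = Suc k" using p unfolding k_def by simp
  have Db: "D b \<in> Od" and Dm: "D m \<in> Od" using D_EO(1) b m by auto
  have bm: "b * m = m * b" using ev_comm[OF b m] .
  have mDm: "m * D m = 0" by (rule ev_od_Dsq[OF two m z])
  have mDb: "m * D b = D b * m" using ev_comm_od[OF m Db] .
  have "om p (b + m) = (b ^ Suc k + of_nat (Suc k) * b ^ k * m) * (D b + D m)"
    unfolding om_def k pow_binom[OF bm z] D_add by (rule refl)
  also have "\<dots> = b ^ Suc k * D b + b ^ Suc k * D m + of_nat (Suc k) * b ^ k * (m * D b) + of_nat (Suc k) * b ^ k * (m * D m)"
    by (simp add: algebra_simps)
  also have "\<dots> = b ^ Suc k * D b + (b ^ Suc k * D m + of_nat (Suc k) * b ^ k * D b * m)"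
    by (simp add: mDm mDb mult.assoc)
  also have "b ^ Suc k * D m + of_nat (Suc k) * b ^ k * D b * m = D (b ^ Suc k * m)"
  proof -
    have e: "D (b ^ Suc k * m) = of_nat (Suc k) * b ^ k * D b * m + b ^ Suc k * D m"
      unfolding D_mult D_pow[OF b] sig_EO(1)[OF ev_pow[OF b]] by (rule refl)
    show ?thesis by (subst e) (rule add.commute)
  qed
  finally show ?thesis unfolding om_def k .
qed

lemma om_list:
  assumes two: "(2::'k::field) \<noteq> 0" and p: "2 \<le> p"
  shows "set ms \<subseteq> {m. m \<in> Ev \<and> m * m = 0} \<Longrightarrow> b \<in> (Ev :: 'k op set) \<Longrightarrow> \<exists>Y. om p (b + sum_list ms) = om p b + D Y"
proof (induct ms arbitrary: b)
  case Nil show ?case by (rule exI[of _ 0]) (simp add: D_zero)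
next
  case (Cons m ms)
  have m: "m \<in> Ev" "m * m = 0" using Cons.prems by auto
  have "b + m \<in> Ev" using Cons.prems m by (intro ev_add) auto
  then obtain Y where Y: "om p (b + m + sum_list ms) = om p (b + m) + D Y"
    using Cons by auto
  have "om p (b + sum_list (m # ms)) = om p (b + m + sum_list ms)" by (simp add: add.assoc)
  also have "\<dots> = om p b + D (b ^ (p - 1) * m + Y)"
    using Y om_step[OF two p Cons.prems(2) m] by (simp add: D_add add.assoc)
  finally show ?case by blast
qed

lemma decomp:
  assumes two: "(2::'k::field) \<noteq> 0"
  shows "(x::'k op) \<in> Ev \<Longrightarrow> \<exists>a0 ms. a0 \<in> Pp \<and> set ms \<subseteq> {m. m \<in> Ev \<and> m * m = 0} \<and> x = a0 + sum_list ms"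
    and "(z::'k op) \<in> Od \<Longrightarrow> True"
proof (induct x and z rule: Ev_Od.inducts)
  case (ev_sc c) show ?case by (rule exI[of _ "sc c"], rule exI[of _ "[]"]) (simp add: pp_sc)
next
  case (ev_Tm i) show ?case by (rule exI[of _ "Tm i"], rule exI[of _ "[]"]) (simp add: pp_Tm)
next
  case (ev_add a b)
  then obtain a0 ms b0 ns where A: "a0 \<in> Pp" "set ms \<subseteq> {m. m \<in> Ev \<and> m * m = 0}" "a = a0 + sum_list ms"
    and B: "b0 \<in> Pp" "set ns \<subseteq> {m. m \<in> Ev \<and> m * m = 0}" "b = b0 + sum_list ns" by blast
  show ?case
    by (rule exI[of _ "a0 + b0"], rule exI[of _ "ms @ ns"]) (use A B in \<open>auto intro: pp_add simp: algebra_simps\<close>)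
next
  case (ev_mult a b)
  then obtain a0 ms b0 ns where A: "a0 \<in> Pp" "set ms \<subseteq> {m. m \<in> Ev \<and> m * m = 0}" "a = a0 + sum_list ms"
    and B: "b0 \<in> Pp" "set ns \<subseteq> {m. m \<in> Ev \<and> m * m = 0}" "b = b0 + sum_list ns" by blast
  have bE: "b \<in> Ev" using ev_mult by simp
  have a0E: "a0 \<in> Ev" by (rule Pp_Ev[OF A(1)])
  have s1: "set (map (\<lambda>n. a0 * n) ns) \<subseteq> {m. m \<in> Ev \<and> m * m = 0}"
  proof
    fix y assume "y \<in> set (map (\<lambda>n. a0 * n) ns)"
    then obtain n where n: "n \<in> set ns" "y = a0 * n" by auto
    have nE: "n \<in> Ev" "n * n = 0" using n B by auto
    have "y * y = a0 * (n * a0) * n" using n by (simp add: mult.assoc)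
    also have "\<dots> = a0 * a0 * (n * n)" using ev_comm[OF nE(1) a0E] by (simp add: mult.assoc)
    finally have "y * y = 0" using nE by simp
    thus "y \<in> {m. m \<in> Ev \<and> m * m = 0}" using n nE a0E by (auto intro: Ev_Od.ev_mult)
  qed
  have s2: "set (map (\<lambda>m. m * b) ms) \<subseteq> {m. m \<in> Ev \<and> m * m = 0}"
  proof
    fix y assume "y \<in> set (map (\<lambda>m. m * b) ms)"
    then obtain m where m: "m \<in> set ms" "y = m * b" by auto
    have mE: "m \<in> Ev" "m * m = 0" using m A by auto
    have "y * y = m * (b * m) * b" using m by (simp add: mult.assoc)
    also have "\<dots> = m * m * (b * b)" using ev_comm[OF bE mE(1)] by (simp add: mult.assoc)
    finally have "y * y = 0" using mE by simp
    thus "y \<in> {m. m \<in> Ev \<and> m * m = 0}" using m mE bE by (auto intro: Ev_Od.ev_mult)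
  qed
  have eq: "a * b = a0 * b0 + sum_list (map (\<lambda>n. a0 * n) ns @ map (\<lambda>m. m * b) ms)"
  proof -
    have "a * b = a0 * b + sum_list ms * b" using A by (simp add: algebra_simps)
    also have "sum_list ms * b = sum_list (map (\<lambda>m. m * b) ms)"
      using sum_list_mult_const[of "\<lambda>m. m" b ms] by simp
    also have "a0 * b = a0 * b0 + sum_list (map (\<lambda>n. a0 * n) ns)"
      using B sum_list_const_mult[of a0 "\<lambda>n. n" ns] by (simp add: algebra_simps)
    finally show ?thesis by (simp add: add.assoc)
  qed
  show ?case
    by (rule exI[of _ "a0 * b0"], rule exI[of _ "map (\<lambda>n. a0 * n) ns @ map (\<lambda>m. m * b) ms"])
       (use A B s1 s2 eq in \<open>auto intro: pp_mult\<close>)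
next
  case (ev_mult_od a b)
  have sq: "(a * b) * (a * b) = 0"
  proof -
    have "(a * b) * (a * b) = a * (b * a) * b" by (simp add: mult.assoc)
    also have "\<dots> = - (a * (a * b) * b)" using od_anti[OF ev_mult_od(3) ev_mult_od(1)] by simp
    also have "\<dots> = - ((a * a) * (b * b))" by (simp add: mult.assoc)
    finally show ?thesis using od_sq[OF two ev_mult_od(1)] by simp
  qed
  show ?case
    by (rule exI[of _ 0], rule exI[of _ "[a * b]"])
       (use sq ev_mult_od in \<open>auto intro: Ev_Od.intros pp_sc[of 0, simplified sc_zero]\<close>)
qed simp_all

definition Good :: "nat \<Rightarrow> 'k::field op \<Rightarrow> bool" where
  "Good q X \<longleftrightarrow> D X = 0 \<and> (\<exists>Z Y. X = Z + D Y \<and> hdeg q Z \<and> D Z = 0)"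

lemma Good_mult: assumes "Good q X" "Good r X'" shows "Good (q + r) (X * X')"
proof -
  obtain Z Y where X: "X = Z + D Y" "hdeg q Z" "D Z = 0" and DX: "D X = 0" using assms(1) unfolding Good_def by blast
  obtain Z' Y' where X': "X' = Z' + D Y'" "hdeg r Z'" "D Z' = 0" and DX': "D X' = 0" using assms(2) unfolding Good_def by blast
  have "D (X * X') = 0" by (simp add: D_mult DX DX')
  moreover have "D (Z * Z') = 0" by (simp add: D_mult X X')
  moreover have "X * X' = Z * Z' + D (sig Z * Y' + Y * X')"
  proof -
    have a: "D (Y * X') = D Y * X'" by (simp add: D_mult DX')
    have "sig (0::'a op) = 0" by (simp add: sig_def)
    hence "D (sig Z) = 0" by (simp add: D_sig X(3))
    hence b: "D (sig Z * Y') = Z * D Y'" by (simp add: D_mult sig_sig)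
    have "X * X' = Z * X' + D Y * X'" using X by (simp add: algebra_simps)
    also have "Z * X' = Z * Z' + Z * D Y'" using X' by (simp add: algebra_simps)
    finally show ?thesis by (simp add: D_add a b algebra_simps)
  qed
  ultimately show ?thesis unfolding Good_def using hdeg_mult[OF X(2) X'(2)] by blast
qed

lemma Good_sc: "Good 0 (sc c)"
  unfolding Good_def by (rule conjI, simp add: sc_D, rule exI[of _ "sc c"], rule exI[of _ 0]) (simp add: D_zero hdeg_sc sc_D)

lemma D_om: assumes "(2::'k::field) \<noteq> 0" "2 \<le> p" "a \<in> (Ev :: 'k op set)" shows "D (om p a) = 0"
proof -
  define k where "k = p - 2"
  have k: "p - 1 = Suc k" using assms(2) unfolding k_def by simp
  have Da: "D a \<in> Od" using D_EO(1)[OF assms(3)] .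
  have "D (om p a) = D (a ^ Suc k) * D a + sig (a ^ Suc k) * D (D a)"
    unfolding om_def k by (rule D_mult)
  also have "\<dots> = of_nat (Suc k) * a ^ k * (D a * D a)"
    unfolding D_pow[OF assms(3)] DD_EO(1)[OF assms(3)] by (simp add: mult.assoc)
  also have "\<dots> = 0" using od_sq[OF assms(1) Da] by simp
  finally show ?thesis .
qed

lemma Good_om: assumes two: "(2::'k::field) \<noteq> 0" and p: "2 \<le> p" and a: "a \<in> (Ev :: 'k op set)"
  shows "Good 1 (om p a)"
proof -
  obtain a0 ms where A: "a0 \<in> Pp" "set ms \<subseteq> {m. m \<in> Ev \<and> m * m = 0}" "a = a0 + sum_list ms"
    using decomp(1)[OF two a] by blast
  obtain Y where Y: "om p a = om p a0 + D Y" using om_list[OF two p A(2) Pp_Ev[OF A(1)]] A(3) by auto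
  have "hdeg (0 + 1) (om p a0)" unfolding om_def
    by (intro hdeg_mult Pp_hdeg pp_pow A(1) Pp_D_hdeg)
  thus ?thesis unfolding Good_def using Y D_om[OF two p a] D_om[OF two p Pp_Ev[OF A(1)]] by auto
qed

definition supp :: "('k::field) fa \<Rightarrow> nat list set" where "supp f = {w. f w \<noteq> 0}"
definition monop :: "(nat \<Rightarrow> 'k::field op) \<Rightarrow> nat list \<Rightarrow> 'k op" where "monop h w = prod_list (map h w)"
definition ev :: "(nat \<Rightarrow> 'k::field op) \<Rightarrow> 'k fa \<Rightarrow> 'k op" where
  "ev h f = (\<Sum>w\<in>supp f. sc (f w) * monop h w)"

lemma carrier_iff: "f \<in> fa_carrier \<longleftrightarrow> finite (supp f)" by (simp add: fa_carrier_def supp_def)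

lemma sc_sum: "sc (sum g A) = (\<Sum>x\<in>A. sc (g x))"
  by (induct A rule: infinite_finite_induct) (simp_all add: sc_zero sc_add)

lemma sc_mult': "sc (a * b) = sc a * sc b" by (simp add: sc_mult)
lemma sc_diff: "sc (a - b) = sc a - sc b"
  by (rule op_eqI) (simp add: Rep_sc Rep_minus algebra_simps)

lemma monop_append: "monop h (u @ v) = monop h u * monop h v" by (simp add: monop_def)

lemma ev_sup:
  assumes "finite A" "supp f \<subseteq> A"
  shows "ev h f = (\<Sum>w\<in>A. sc (f w) * monop h w)"
  unfolding ev_def
  by (rule sum.mono_neutral_left[OF assms]) (auto simp: supp_def sc_zero)

lemma supp_add: "supp (fa_add f g) \<subseteq> supp f \<union> supp g" by (auto simp: supp_def fa_add_def)
lemma supp_sub: "supp (fa_sub f g) \<subseteq> supp f \<union> supp g" by (auto simp: supp_def fa_sub_def)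
lemma supp_smult: "supp (fa_smult c f) \<subseteq> supp f" by (auto simp: supp_def fa_smult_def)

lemma supp_mult: "supp (fa_mult f g) \<subseteq> (\<lambda>(u, v). u @ v) ` (supp f \<times> supp g)"
proof
  fix w assume "w \<in> supp (fa_mult f g)"
  hence "(\<Sum>i\<le>length w. f (take i w) * g (drop i w)) \<noteq> 0" by (simp add: supp_def fa_mult_def)
  hence "\<exists>i\<in>{..length w}. f (take i w) * g (drop i w) \<noteq> 0"
  proof (rule contrapos_np)
    assume "\<not> (\<exists>i\<in>{..length w}. f (take i w) * g (drop i w) \<noteq> 0)"
    thus "(\<Sum>i\<le>length w. f (take i w) * g (drop i w)) = 0" by (intro sum.neutral) auto
  qed
  then obtain i where "f (take i w) * g (drop i w) \<noteq> 0" by blast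
  hence "take i w \<in> supp f" "drop i w \<in> supp g" unfolding supp_def by auto
  moreover have "w = take i w @ drop i w" by simp
  ultimately show "w \<in> (\<lambda>(u, v). u @ v) ` (supp f \<times> supp g)"
    by (intro image_eqI[where x="(take i w, drop i w)"]) simp_all
qed

lemma carrier_add: "f \<in> fa_carrier \<Longrightarrow> g \<in> fa_carrier \<Longrightarrow> fa_add f g \<in> fa_carrier"
  unfolding carrier_iff by (rule finite_subset[OF supp_add]) simp
lemma carrier_sub: "f \<in> fa_carrier \<Longrightarrow> g \<in> fa_carrier \<Longrightarrow> fa_sub f g \<in> fa_carrier"
  unfolding carrier_iff by (rule finite_subset[OF supp_sub]) simp
lemma carrier_smult: "f \<in> fa_carrier \<Longrightarrow> fa_smult c f \<in> fa_carrier"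
  unfolding carrier_iff by (rule finite_subset[OF supp_smult])
lemma carrier_mult: "f \<in> fa_carrier \<Longrightarrow> g \<in> fa_carrier \<Longrightarrow> fa_mult f g \<in> fa_carrier"
  unfolding carrier_iff by (rule finite_subset[OF supp_mult]) simp
lemma supp_one: "supp (fa_one :: 'k::field fa) = {[]}" by (auto simp: supp_def fa_one_def)
lemma supp_var: "supp (fa_var i :: 'k::field fa) = {[i]}" by (auto simp: supp_def fa_var_def)
lemma supp_zero: "supp (fa_zero :: 'k::field fa) = {}" by (auto simp: supp_def fa_zero_def)
lemma carrier_one: "fa_one \<in> fa_carrier" by (simp add: carrier_iff supp_one)
lemma carrier_var: "fa_var i \<in> fa_carrier" by (simp add: carrier_iff supp_var)
lemma carrier_zero: "fa_zero \<in> fa_carrier" by (simp add: carrier_iff supp_zero)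

lemma evf_add: assumes "f \<in> fa_carrier" "g \<in> fa_carrier" shows "ev h (fa_add f g) = ev h f + ev h g"
proof -
  let ?A = "supp f \<union> supp g"
  have fA: "finite ?A" using assms by (simp add: carrier_iff)
  have "ev h (fa_add f g) = (\<Sum>w\<in>?A. sc (fa_add f g w) * monop h w)" using ev_sup[OF fA supp_add] .
  also have "\<dots> = (\<Sum>w\<in>?A. sc (f w) * monop h w) + (\<Sum>w\<in>?A. sc (g w) * monop h w)"
    by (simp add: fa_add_def sc_add distrib_right sum.distrib)
  also have "\<dots> = ev h f + ev h g" using ev_sup[OF fA, of f] ev_sup[OF fA, of g] by auto
  finally show ?thesis .
qed

lemma evf_sub: assumes "f \<in> fa_carrier" "g \<in> fa_carrier" shows "ev h (fa_sub f g) = ev h f - ev h g"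
proof -
  let ?A = "supp f \<union> supp g"
  have fA: "finite ?A" using assms by (simp add: carrier_iff)
  have "ev h (fa_sub f g) = (\<Sum>w\<in>?A. sc (fa_sub f g w) * monop h w)" using ev_sup[OF fA supp_sub] .
  also have "\<dots> = (\<Sum>w\<in>?A. sc (f w) * monop h w) - (\<Sum>w\<in>?A. sc (g w) * monop h w)"
    by (simp add: fa_sub_def sc_diff left_diff_distrib sum_subtractf)
  also have "\<dots> = ev h f - ev h g" using ev_sup[OF fA, of f] ev_sup[OF fA, of g] by auto
  finally show ?thesis .
qed

lemma evf_smult: assumes "f \<in> fa_carrier" shows "ev h (fa_smult c f) = sc c * ev h f"
proof -
  have fA: "finite (supp f)" using assms by (simp add: carrier_iff)
  have "ev h (fa_smult c f) = (\<Sum>w\<in>supp f. sc (fa_smult c f w) * monop h w)" using ev_sup[OF fA supp_smult] .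
  also have "\<dots> = sc c * ev h f"
    by (simp add: fa_smult_def sc_mult'[of c] ev_def sum_distrib_left mult.assoc)
  finally show ?thesis .
qed

lemma evf_zero: "ev h fa_zero = 0" by (simp add: ev_def supp_zero)
lemma evf_one: "ev h fa_one = 1" unfolding ev_def supp_one by (simp add: fa_one_def sc_one monop_def)
lemma evf_var: "ev h (fa_var i) = h i" unfolding ev_def supp_var by (simp add: fa_var_def sc_one monop_def)

lemma evf_mult: assumes "f \<in> fa_carrier" "g \<in> fa_carrier" shows "ev h (fa_mult f g) = ev h f * ev h g"
proof -
  define SF where "SF = supp f"
  define SG where "SG = supp g"
  have fin: "finite SF" "finite SG" using assms by (simp_all add: carrier_iff SF_def SG_def)
  define A where "A = (\<lambda>(u, v). u @ v) ` (SF \<times> SG)"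
  have fA: "finite A" unfolding A_def using fin by simp
  define T where "T = (\<lambda>(w, i). sc (f (take i w)) * sc (g (drop i w)) * monop h w)"
  define E where "E = (\<lambda>(u, v). (u @ v, length u)) ` (SF \<times> SG)"
  have "ev h (fa_mult f g) = (\<Sum>w\<in>A. sc (fa_mult f g w) * monop h w)"
    using ev_sup[OF fA] supp_mult unfolding A_def SF_def SG_def by blast
  also have "\<dots> = (\<Sum>w\<in>A. \<Sum>i\<in>{..length w}. T (w, i))"
    by (simp add: fa_mult_def sc_sum sc_mult' sum_distrib_right T_def)
  also have "\<dots> = (\<Sum>x\<in>Sigma A (\<lambda>w. {..length w}). T x)"
    using sum.Sigma[OF fA, of "\<lambda>w. {..length w}" "\<lambda>w i. T (w, i)"] by (simp add: split_def)
  also have "\<dots> = (\<Sum>x\<in>E. T x)"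
  proof (rule sum.mono_neutral_right)
    show "finite (Sigma A (\<lambda>w. {..length w}))" using fA by auto
    show "E \<subseteq> Sigma A (\<lambda>w. {..length w})"
    proof
      fix x assume "x \<in> E"
      then obtain u v where uv: "u \<in> SF" "v \<in> SG" "x = (u @ v, length u)" unfolding E_def by auto
      have "u @ v \<in> A" unfolding A_def using uv by (intro image_eqI[where x="(u, v)"]) auto
      thus "x \<in> Sigma A (\<lambda>w. {..length w})" using uv by simp
    qed
    show "\<forall>x\<in>Sigma A (\<lambda>w. {..length w}) - E. T x = 0"
    proof
      fix x assume x: "x \<in> Sigma A (\<lambda>w. {..length w}) - E"
      obtain w i where wi: "x = (w, i)" by (cases x)
      have il: "i \<le> length w" using x wi by auto
      have nE: "(w, i) \<notin> E" using x wi by simp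
      have "\<not> (take i w \<in> SF \<and> drop i w \<in> SG)"
      proof
        assume a: "take i w \<in> SF \<and> drop i w \<in> SG"
        have "(take i w @ drop i w, length (take i w)) \<in> E"
          unfolding E_def using a by (intro image_eqI[where x="(take i w, drop i w)"]) auto
        moreover have "length (take i w) = i" using il by simp
        ultimately have "(w, i) \<in> E" by simp
        thus False using nE by simp
      qed
      hence "f (take i w) = 0 \<or> g (drop i w) = 0" unfolding SF_def SG_def supp_def by simp
      thus "T x = 0" unfolding wi T_def by (auto simp: sc_zero)
    qed
  qed
  also have "\<dots> = (\<Sum>x\<in>SF \<times> SG. T ((\<lambda>(u, v). (u @ v, length u)) x))"
    unfolding E_def by (subst sum.reindex) (auto simp: inj_on_def o_def)
  also have "\<dots> = (\<Sum>x\<in>SF \<times> SG. (sc (f (fst x)) * monop h (fst x)) * (sc (g (snd x)) * monop h (snd x)))"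
  proof (rule sum.cong)
    fix x assume "x \<in> SF \<times> SG"
    obtain u v where x: "x = (u, v)" by (cases x)
    have c: "sc (g v) * monop h u = monop h u * sc (g v)" by (rule sc_comm)
    have "sc (f u) * sc (g v) * (monop h u * monop h v) = sc (f u) * (sc (g v) * monop h u) * monop h v"
      by (simp only: mult.assoc)
    also have "\<dots> = (sc (f u) * monop h u) * (sc (g v) * monop h v)" by (simp only: c mult.assoc)
    finally show "T ((\<lambda>(u, v). (u @ v, length u)) x) = (sc (f (fst x)) * monop h (fst x)) * (sc (g (snd x)) * monop h (snd x))"
      unfolding x T_def by (simp add: monop_append)
  qed simp
  also have "\<dots> = (\<Sum>u\<in>SF. sc (f u) * monop h u) * (\<Sum>v\<in>SG. sc (g v) * monop h v)"
    by (simp add: sum_product sum.cartesian_product split_def)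
  also have "\<dots> = ev h f * ev h g" by (simp add: ev_def SF_def SG_def)
  finally show ?thesis .
qed

lemma carrier_prodlist: "\<forall>x\<in>set l. x \<in> fa_carrier \<Longrightarrow> fa_prodlist l \<in> fa_carrier"
  by (induct l) (auto simp: fa_prodlist_def carrier_one carrier_mult)

lemma ev_prodlist: "\<forall>x\<in>set l. x \<in> fa_carrier \<Longrightarrow> ev h (fa_prodlist l) = prod_list (map (ev h) l)"
proof (induct l)
  case Nil show ?case by (simp add: fa_prodlist_def evf_one)
next
  case (Cons x l)
  have "fa_prodlist (x # l) = fa_mult x (fa_prodlist l)" by (simp add: fa_prodlist_def)
  moreover have "fa_prodlist l \<in> fa_carrier" using Cons.prems by (intro carrier_prodlist) auto
  ultimately show ?case using Cons by (simp add: evf_mult)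
qed

lemma carrier_pow: "a \<in> fa_carrier \<Longrightarrow> fa_pow a n \<in> fa_carrier"
  unfolding fa_pow_def by (intro carrier_prodlist) simp

lemma ev_fpow: "a \<in> fa_carrier \<Longrightarrow> ev h (fa_pow a n) = ev h a ^ n"
  unfolding fa_pow_def by (subst ev_prodlist) (auto simp: prod_list_replicate)

lemma carrier_comm: "a \<in> fa_carrier \<Longrightarrow> b \<in> fa_carrier \<Longrightarrow> fa_comm a b \<in> fa_carrier"
  unfolding fa_comm_def by (intro carrier_sub carrier_mult)

lemma ev_fcomm: "a \<in> fa_carrier \<Longrightarrow> b \<in> fa_carrier \<Longrightarrow> ev h (fa_comm a b) = ev h a * ev h b - ev h b * ev h a"
  unfolding fa_comm_def by (simp add: evf_sub carrier_mult evf_mult)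

definition kop :: "nat \<Rightarrow> 'k::field op \<Rightarrow> 'k op \<Rightarrow> 'k op" where
  "kop p u v = (u * v - v * u) * u ^ (p - 1) * v ^ (p - 1)"

lemma carrier_kappa: "a \<in> fa_carrier \<Longrightarrow> b \<in> fa_carrier \<Longrightarrow> kappa p a b \<in> fa_carrier"
  unfolding kappa_def by (intro carrier_mult carrier_comm carrier_pow)

lemma ev_kappa: "a \<in> fa_carrier \<Longrightarrow> b \<in> fa_carrier \<Longrightarrow> ev h (kappa p a b) = kop p (ev h a) (ev h b)"
  unfolding kappa_def kop_def
  by (simp add: evf_mult carrier_mult carrier_comm carrier_pow ev_fcomm ev_fpow)

lemma carrier_wpoly: "\<forall>r. u r \<in> fa_carrier \<Longrightarrow> w_poly p m u \<in> fa_carrier"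
  unfolding w_poly_def by (intro carrier_prodlist) (auto intro: carrier_kappa)

lemma ev_wpoly: "\<forall>r. u r \<in> fa_carrier \<Longrightarrow>
   ev h (w_poly p m u) = prod_list (map (\<lambda>r. kop p (ev h (u (2*r - 1))) (ev h (u (2*r)))) [1..<m+1])"
  unfolding w_poly_def by (subst ev_prodlist) (auto intro: carrier_kappa simp: ev_kappa o_def)

lemma lincomb:
  assumes "finite W" "\<forall>w\<in>W. g w \<in> fa_carrier"
  shows "(\<lambda>v. \<Sum>w\<in>W. c w * g w v) \<in> fa_carrier \<and> ev h (\<lambda>v. \<Sum>w\<in>W. c w * g w v) = (\<Sum>w\<in>W. sc (c w) * ev h (g w))"
  using assms
proof (induct W rule: finite_induct)
  case empty
  have "(\<lambda>v. \<Sum>w\<in>{}. c w * g w v) = fa_zero" by (simp add: fa_zero_def)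
  thus ?case by (simp add: carrier_zero evf_zero)
next
  case (insert x F)
  have e: "(\<lambda>v. \<Sum>w\<in>insert x F. c w * g w v) = fa_add (fa_smult (c x) (g x)) (\<lambda>v. \<Sum>w\<in>F. c w * g w v)"
    using insert by (simp add: fa_add_def fa_smult_def)
  have gx: "g x \<in> fa_carrier" using insert by simp
  have IH: "(\<lambda>v. \<Sum>w\<in>F. c w * g w v) \<in> fa_carrier \<and> ev h (\<lambda>v. \<Sum>w\<in>F. c w * g w v) = (\<Sum>w\<in>F. sc (c w) * ev h (g w))"
    using insert by simp
  show ?case unfolding e using IH gx insert(1,2)
    by (simp add: carrier_add carrier_smult evf_add evf_smult)
qed

lemma subst_carrier_ev:
  assumes f: "f \<in> fa_carrier" and s: "\<forall>i. \<sigma> i \<in> fa_carrier"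
  shows "fa_subst \<sigma> f \<in> fa_carrier \<and> ev h (fa_subst \<sigma> f) = ev (\<lambda>i. ev h (\<sigma> i)) f"
proof -
  have fin: "finite (supp f)" using f by (simp add: carrier_iff)
  have g: "\<forall>w\<in>supp f. fa_prodlist (map \<sigma> w) \<in> fa_carrier" using s by (auto intro!: carrier_prodlist)
  have e: "fa_subst \<sigma> f = (\<lambda>v. \<Sum>w\<in>supp f. f w * fa_prodlist (map \<sigma> w) v)"
    by (simp add: fa_subst_def supp_def)
  have "ev h (fa_subst \<sigma> f) = (\<Sum>w\<in>supp f. sc (f w) * ev h (fa_prodlist (map \<sigma> w)))"
    unfolding e using lincomb[OF fin g] by blast
  also have "\<dots> = (\<Sum>w\<in>supp f. sc (f w) * monop (\<lambda>i. ev h (\<sigma> i)) w)"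
    using s by (intro sum.cong refl) (simp add: ev_prodlist monop_def o_def)
  also have "\<dots> = ev (\<lambda>i. ev h (\<sigma> i)) f" by (simp add: ev_def)
  moreover have "fa_subst \<sigma> f \<in> fa_carrier" unfolding e using lincomb[OF fin g] by blast
  ultimately show ?thesis by simp
qed

definition Bset :: "'k::field op set" where "Bset = {x. \<exists>a\<in>Ev. x = a + D a}"

lemma B_zero: "0 \<in> Bset" unfolding Bset_def using ev_zero by (auto intro!: bexI[of _ 0] simp: D_zero)
lemma B_one: "1 \<in> Bset" unfolding Bset_def using ev_one
  by (auto intro!: bexI[of _ 1] simp: sc_D[of 1, simplified sc_one])
lemma B_add: assumes "x \<in> Bset" "y \<in> Bset" shows "x + y \<in> Bset"
proof -
  obtain a where a: "a \<in> Ev" "x = a + D a" using assms(1) unfolding Bset_def by blast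
  obtain c where c: "c \<in> Ev" "y = c + D c" using assms(2) unfolding Bset_def by blast
  have "x + y = (a + c) + D (a + c)" using a c by (simp add: D_add algebra_simps)
  moreover have "a + c \<in> Ev" using a c by (intro Ev_Od.ev_add)
  ultimately show ?thesis unfolding Bset_def by blast
qed
lemma B_sc: assumes "x \<in> Bset" shows "sc c * x \<in> Bset"
proof -
  obtain a where a: "a \<in> Ev" "x = a + D a" using assms unfolding Bset_def by blast
  have "sc c * x = sc c * a + D (sc c * a)" by (simp add: a(2) D_sc_mult distrib_left)
  moreover have "sc c * a \<in> Ev" using a(1) by (intro Ev_Od.ev_mult ev_sc)
  ultimately show ?thesis unfolding Bset_def by blast
qed

lemma B_mult: assumes "x \<in> Bset" "y \<in> Bset" shows "x * y \<in> Bset"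
proof -
  obtain a where a: "a \<in> Ev" "x = a + D a" using assms(1) unfolding Bset_def by blast
  obtain c where c: "c \<in> Ev" "y = c + D c" using assms(2) unfolding Bset_def by blast
  have Da: "D a \<in> Od" and Dc: "D c \<in> Od" using D_EO(1) a c by auto
  have e: "D (a * c + D a * D c) = D a * c + a * D c"
    by (simp add: D_add D_mult sig_EO(1)[OF a(1)] sig_EO(2)[OF Da] DD_EO(1)[OF a(1)] DD_EO(1)[OF c(1)])
  have "x * y = (a * c + D a * D c) + D (a * c + D a * D c)"
    unfolding e a(2) c(2) by (simp add: algebra_simps)
  moreover have "a * c + D a * D c \<in> Ev" using a c Da Dc by (intro Ev_Od.ev_add Ev_Od.ev_mult ev_mult_od)
  ultimately show ?thesis unfolding Bset_def by blast
qed

lemma B_sum: "finite A \<Longrightarrow> (\<forall>x\<in>A. g x \<in> Bset) \<Longrightarrow> sum g A \<in> Bset"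
  by (induct A rule: finite_induct) (auto intro: B_zero B_add)

lemma B_prodlist: "\<forall>x\<in>set l. x \<in> Bset \<Longrightarrow> prod_list l \<in> Bset"
  by (induct l) (auto intro: B_one B_mult)

lemma ev_B: assumes "\<forall>i. h i \<in> Bset" "f \<in> fa_carrier" shows "ev h f \<in> Bset"
  unfolding ev_def monop_def using assms
  by (intro B_sum) (auto simp: carrier_iff intro!: B_sc B_prodlist)

lemma kop_B:
  assumes two: "(2::'k::field) \<noteq> 0" and p: "2 \<le> p" and a: "a \<in> (Ev :: 'k op set)" and c: "c \<in> Ev"
  shows "kop p (a + D a) (c + D c) = of_nat 2 * (om p a * om p c)"
proof -
  define k where "k = p - 2"
  have k: "p - 1 = Suc k" using p unfolding k_def by simp
  define A where "A = D a"
  define C where "C = D c"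
  have A: "A \<in> Od" and C: "C \<in> Od" using D_EO(1) a c by (auto simp: A_def C_def)
  have AA: "A * A = 0" and CC: "C * C = 0" using od_sq[OF two] A C by auto
  have aA: "a * A = A * a" using ev_comm_od[OF a A] .
  have cC: "c * C = C * c" using ev_comm_od[OF c C] .
  define Q where "Q = A * C"
  have QE: "Q \<in> Ev" unfolding Q_def using A C by (rule ev_mult_od)
  have Qc: "\<And>X. X \<in> Ev \<Longrightarrow> Q * X = X * Q" using ev_comm[OF QE] by blast
  have QA: "Q * A = 0"
  proof -
    have "Q * A = A * (C * A)" by (simp add: Q_def mult.assoc)
    also have "\<dots> = - (A * A * C)" using od_anti[OF C A] by (simp add: mult.assoc)
    finally show ?thesis using AA by simp
  qed
  have QC: "Q * C = 0" by (simp add: Q_def mult.assoc CC)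
  have comm: "(a + A) * (c + C) - (c + C) * (a + A) = Q + Q"
  proof -
    have "(a + A) * (c + C) - (c + C) * (a + A) = (a * c - c * a) + (a * C - C * a) + (A * c - c * A) + (A * C - C * A)"
      by (simp add: algebra_simps)
    also have "\<dots> = A * C - C * A"
      using ev_comm[OF a c] ev_comm_od[OF a C] ev_comm_od[OF c A] by simp
    also have "\<dots> = Q + Q" using od_anti[OF C A] by (simp add: Q_def)
    finally show ?thesis .
  qed
  have pa: "(a + A) ^ (p - 1) = a ^ Suc k + of_nat (Suc k) * a ^ k * A"
    unfolding k by (rule pow_binom[OF aA AA])
  have pc: "(c + C) ^ (p - 1) = c ^ Suc k + of_nat (Suc k) * c ^ k * C"
    unfolding k by (rule pow_binom[OF cC CC])
  have ak: "a ^ j \<in> Ev" "c ^ j \<in> Ev" for j using ev_pow a c by auto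
  have s1: "Q * (a ^ Suc k + of_nat (Suc k) * a ^ k * A) = Q * a ^ Suc k"
  proof -
    have "Q * (of_nat (Suc k) * a ^ k * A) = of_nat (Suc k) * a ^ k * (Q * A)"
    proof -
      have "Q * (of_nat (Suc k) * a ^ k) = (of_nat (Suc k) * a ^ k) * Q"
        using Qc[OF Ev_Od.ev_mult[OF ev_of_nat ak(1)]] .
      thus ?thesis by (metis mult.assoc)
    qed
    thus ?thesis by (simp add: distrib_left QA)
  qed
  have s2: "Q * a ^ Suc k * (c ^ Suc k + of_nat (Suc k) * c ^ k * C) = Q * a ^ Suc k * c ^ Suc k"
  proof -
    have "Q * a ^ Suc k * (of_nat (Suc k) * c ^ k * C) = (a ^ Suc k * (of_nat (Suc k) * c ^ k)) * (Q * C)"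
    proof -
      have X: "a ^ Suc k * (of_nat (Suc k) * c ^ k) \<in> Ev" by (intro Ev_Od.ev_mult ak ev_of_nat)
      have "Q * a ^ Suc k * (of_nat (Suc k) * c ^ k * C) = (Q * (a ^ Suc k * (of_nat (Suc k) * c ^ k))) * C"
        by (simp add: mult.assoc)
      also have "\<dots> = (a ^ Suc k * (of_nat (Suc k) * c ^ k)) * (Q * C)" by (simp only: Qc[OF X]) (simp only: mult.assoc)
      finally show ?thesis .
    qed
    thus ?thesis by (simp add: distrib_left QC)
  qed
  have lhs: "kop p (a + A) (c + C) = (Q + Q) * (a ^ Suc k * c ^ Suc k)"
  proof -
    have "kop p (a + A) (c + C) = (Q + Q) * (a ^ Suc k + of_nat (Suc k) * a ^ k * A) * (c ^ Suc k + of_nat (Suc k) * c ^ k * C)"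
      unfolding kop_def comm pa pc by (rule refl)
    also have "\<dots> = (Q * (a ^ Suc k + of_nat (Suc k) * a ^ k * A) + Q * (a ^ Suc k + of_nat (Suc k) * a ^ k * A)) * (c ^ Suc k + of_nat (Suc k) * c ^ k * C)"
      by (simp only: distrib_right)
    also have "\<dots> = (Q * a ^ Suc k * (c ^ Suc k + of_nat (Suc k) * c ^ k * C)) + (Q * a ^ Suc k * (c ^ Suc k + of_nat (Suc k) * c ^ k * C))"
      by (simp only: s1 distrib_right)
    also have "\<dots> = (Q + Q) * (a ^ Suc k * c ^ Suc k)"
      unfolding s2 by (simp only: distrib_right mult.assoc)
    finally show ?thesis .
  qed
  have rhs: "om p a * om p c = Q * (a ^ Suc k * c ^ Suc k)"
  proof -
    have "om p a * om p c = a ^ Suc k * (A * c ^ Suc k) * C" unfolding om_def k A_def C_def by (simp add: mult.assoc)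
    also have "A * c ^ Suc k = c ^ Suc k * A" by (rule sym[OF ev_comm_od[OF ak(2) A]])
    also have "a ^ Suc k * (c ^ Suc k * A) * C = (a ^ Suc k * c ^ Suc k) * Q" by (simp add: Q_def mult.assoc)
    also have "\<dots> = Q * (a ^ Suc k * c ^ Suc k)" by (rule sym[OF Qc[OF Ev_Od.ev_mult[OF ak(1) ak(2)]]])
    finally show ?thesis .
  qed
  show ?thesis unfolding A_def[symmetric] C_def[symmetric] lhs rhs
    by (simp add: distrib_right mult_2)
qed

definition aof :: "'k::field op \<Rightarrow> 'k op" where "aof x = (SOME a. a \<in> Ev \<and> x = a + D a)"

lemma aof: "x \<in> Bset \<Longrightarrow> aof x \<in> Ev \<and> x = aof x + D (aof x)"
  unfolding aof_def Bset_def by (rule someI_ex) auto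

lemma Good_kop:
  assumes two: "(2::'k::field) \<noteq> 0" and p: "2 \<le> p" and x: "x \<in> (Bset :: 'k op set)" and y: "y \<in> Bset"
  shows "Good 2 (kop p x y)"
proof -
  have ax: "aof x \<in> Ev" "x = aof x + D (aof x)" using aof[OF x] by auto
  have ay: "aof y \<in> Ev" "y = aof y + D (aof y)" using aof[OF y] by auto
  have "kop p x y = of_nat 2 * (om p (aof x) * om p (aof y))"
    using kop_B[OF two p ax(1) ay(1)] ax(2) ay(2) by simp
  moreover have "Good (0 + (1 + 1)) (sc (of_nat 2) * (om p (aof x) * om p (aof y)))"
    by (intro Good_mult Good_sc Good_om two p ax(1) ay(1))
  ultimately show ?thesis unfolding sc_of_nat by (simp add: numeral_2_eq_2)
qed

lemma Good_prodlist: "\<forall>x\<in>set xs. Good 2 x \<Longrightarrow> Good (2 * length xs) (prod_list xs)"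
proof (induct xs)
  case Nil show ?case using Good_sc[of 1] by (simp add: sc_one)
next
  case (Cons x xs)
  hence "Good (2 + 2 * length xs) (x * prod_list xs)" by (intro Good_mult) auto
  thus ?case by simp
qed

lemma Good_vac:
  assumes "Good q X" "q \<noteq> card S0" "finite S0" "\<forall>i\<in>S0. of_nat (a0 i + 1) = (0::'k::field)"
  shows "Rep X (vac :: 'k vec) (a0, S0) = 0"
proof -
  obtain Z Y where X: "X = Z + D Y" "hdeg q Z" using assms(1) unfolding Good_def by blast
  show ?thesis unfolding X(1) Rep_plus using hdeg_vac[OF X(2) assms(2)] phi_D[OF assms(3,4)] by simp
qed

definition dl :: "(nat \<Rightarrow> nat) \<Rightarrow> nat set \<Rightarrow> 'k::field vec" where
  "dl a S = (\<lambda>b. if b = (a, S) then 1 else 0)"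

lemma vac_dl: "vac = dl (\<lambda>_. 0) {}" by (simp add: vac_def dl_def)

lemma Dx_dl:
  assumes "finite S" "i \<notin> S" "\<forall>j\<in>S. i < j"
  shows "Rep (Dx i) (dl a S :: 'k::field vec) = dl a (insert i S)"
proof (rule ext, clarify)
  fix b :: "nat \<Rightarrow> nat" and T
  show "Rep (Dx i) (dl a S :: 'k vec) (b, T) = dl a (insert i S) (b, T)"
  proof (cases "b = a \<and> T = insert i S")
    case True
    have e: "{j \<in> insert i S. j < i} = {}" using assms(3) by auto
    have "eps i (insert i S) = (1::'k)" unfolding eps_def e by simp
    moreover have "insert i S - {i} = S" using assms(2) by auto
    ultimately show ?thesis using True assms(1) by (simp add: Rep_Dx dl_def)
  next
    case False
    have "\<not> (finite T \<and> i \<in> T \<and> (b, T - {i}) = (a, S))"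
    proof
      assume h: "finite T \<and> i \<in> T \<and> (b, T - {i}) = (a, S)"
      hence "T = insert i S" by auto
      thus False using False h by simp
    qed
    thus ?thesis using False by (auto simp: Rep_Dx dl_def)
  qed
qed

lemma Tm_dl: "Rep (Tm i) (dl a S :: 'k::field vec) = dl (a(i := a i + 1)) S"
proof (rule ext, clarify)
  fix b :: "nat \<Rightarrow> nat" and T
  show "Rep (Tm i) (dl a S :: 'k vec) (b, T) = dl (a(i := a i + 1)) S (b, T)"
  proof (cases "b = a(i := a i + 1) \<and> T = S")
    case True thus ?thesis by (simp add: Rep_Tm dl_def)
  next
    case False
    have "\<not> (0 < b i \<and> b(i := b i - 1) = a \<and> T = S)"
    proof
      assume h: "0 < b i \<and> b(i := b i - 1) = a \<and> T = S"
      have "b = a(i := a i + 1)"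
      proof
        fix j show "b j = (a(i := a i + 1)) j"
          using h fun_cong[OF conjunct1[OF conjunct2[OF h]], of j] by (cases "j = i") auto
      qed
      thus False using False h by simp
    qed
    thus ?thesis using False by (auto simp: Rep_Tm dl_def)
  qed
qed

lemma Tm_pow_dl: "Rep (Tm i ^ n) (dl a S :: 'k::field vec) = dl (a(i := a i + n)) S"
proof (induct n)
  case 0 show ?case by (simp add: Rep_one)
next
  case (Suc n)
  have "Rep (Tm i ^ Suc n) (dl a S :: 'k vec) = Rep (Tm i) (Rep (Tm i ^ n) (dl a S))" by (simp add: Rep_times)
  also have "\<dots> = dl ((a(i := a i + n))(i := (a(i := a i + n)) i + 1)) S" by (simp only: Suc Tm_dl)
  also have "\<dots> = dl (a(i := a i + Suc n)) S" by simp
  finally show ?case .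
qed

lemma Z_dl:
  assumes "finite S" "i \<notin> S" "\<forall>j\<in>S. i < j" "a i = 0"
  shows "Rep (Tm i ^ q * Dx i) (dl a S :: 'k::field vec) = dl (a(i := q)) (insert i S)"
  by (simp add: Rep_times Dx_dl[OF assms(1-3)] Tm_pow_dl assms(4))

lemma Rep_of_nat: "Rep (of_nat m :: 'k::field op) v = (\<lambda>b. of_nat m * v b)"
  by (simp add: sc_of_nat[symmetric] Rep_sc)

definition hT :: "nat \<Rightarrow> 'k::field op" where "hT i = Tm i + Dx i"

lemma hT_B: "hT i \<in> (Bset :: 'k::field op set)"
proof -
  have "Tm i + D (Tm i) \<in> (Bset :: 'k op set)" unfolding Bset_def using ev_Tm by blast
  thus ?thesis by (simp add: hT_def D_Tm)
qed

definition alf :: "nat \<Rightarrow> nat \<Rightarrow> nat \<Rightarrow> nat \<Rightarrow> nat" where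
  "alf p M k = (\<lambda>i. if 2 * k - 1 \<le> i \<and> i \<le> 2 * M + 2 then p - 1 else 0)"
definition sgs :: "nat \<Rightarrow> nat \<Rightarrow> nat set" where
  "sgs M k = {i. 2 * k - 1 \<le> i \<and> i \<le> 2 * M + 2}"

lemma kop_hT:
  assumes two: "(2::'k::field) \<noteq> 0" and p: "2 \<le> p"
  shows "kop p (hT i) (hT j :: 'k op) = of_nat 2 * ((Tm i ^ (p - 1) * Dx i) * (Tm j ^ (p - 1) * Dx j))"
  using kop_B[OF two p ev_Tm[of i] ev_Tm[of j]] unfolding hT_def om_def D_Tm .

lemma prod_comp:
  assumes two: "(2::'k::field) \<noteq> 0" and p: "2 \<le> p" and k: "1 \<le> k" "k \<le> M + 2"
  shows "Rep (prod_list (map (\<lambda>r. kop p (hT (2*r - 1)) (hT (2*r) :: 'k op)) [k..<M+2])) vac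
       = (\<lambda>b. (2::'k) ^ (M + 2 - k) * dl (alf p M k) (sgs M k) b)"
  using k(2)
proof (induct k rule: inc_induct)
  case base
  have "alf p M (M + 2) = (\<lambda>_. 0)" by (auto simp: alf_def fun_eq_iff)
  moreover have "sgs M (M + 2) = {}" by (auto simp: sgs_def)
  ultimately show ?case by (simp add: Rep_one vac_dl)
next
  case (step n)
  have n1: "1 \<le> n" using k(1) step(1) by simp
  define G where "G r = kop p (hT (2*r - 1)) (hT (2*r) :: 'k op)" for r
  have L: "[n..<M+2] = n # [Suc n..<M+2]" using step(2) by (simp add: upt_conv_Cons)
  have fin: "finite (sgs M (Suc n))" unfolding sgs_def by (rule finite_subset[of _ "{..2*M+2}"]) auto
  have Z1: "Rep (Tm (2*n) ^ (p - 1) * Dx (2*n)) (dl (alf p M (Suc n)) (sgs M (Suc n)) :: 'k vec)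
      = dl ((alf p M (Suc n))(2*n := p - 1)) (insert (2*n) (sgs M (Suc n)))"
    by (rule Z_dl[OF fin]) (auto simp: sgs_def alf_def)
  have fin2: "finite (insert (2*n) (sgs M (Suc n)))" using fin by simp
  have Z2: "Rep (Tm (2*n - 1) ^ (p - 1) * Dx (2*n - 1)) (dl ((alf p M (Suc n))(2*n := p - 1)) (insert (2*n) (sgs M (Suc n))) :: 'k vec)
      = dl ((alf p M (Suc n))(2*n := p - 1, 2*n - 1 := p - 1)) (insert (2*n - 1) (insert (2*n) (sgs M (Suc n))))"
    by (rule Z_dl[OF fin2]) (use n1 in \<open>auto simp: sgs_def alf_def\<close>)
  have ea: "(alf p M (Suc n))(2*n := p - 1, 2*n - 1 := p - 1) = alf p M n"
    using n1 step(2) by (auto simp: alf_def fun_eq_iff)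
  have es: "insert (2*n - 1) (insert (2*n) (sgs M (Suc n))) = sgs M n"
    using n1 step(2) by (auto simp: sgs_def)
  have "Rep (prod_list (map G [n..<M+2])) vac = Rep (G n) (Rep (prod_list (map G [Suc n..<M+2])) vac)"
    unfolding L by (simp add: Rep_times)
  also have "Rep (prod_list (map G [Suc n..<M+2])) vac = (\<lambda>b. (2::'k) ^ (M + 2 - Suc n) * dl (alf p M (Suc n)) (sgs M (Suc n)) b)"
    using step(3) unfolding G_def by simp
  also have "Rep (G n) (\<lambda>b. (2::'k) ^ (M + 2 - Suc n) * dl (alf p M (Suc n)) (sgs M (Suc n)) b)
      = (\<lambda>b. (2::'k) ^ (M + 2 - Suc n) * Rep (G n) (dl (alf p M (Suc n)) (sgs M (Suc n))) b)"
    by (rule Rep_smultv)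
  also have "Rep (G n) (dl (alf p M (Suc n)) (sgs M (Suc n))) = (\<lambda>b. 2 * dl (alf p M n) (sgs M n) b)"
    unfolding G_def kop_hT[OF two p] Rep_times Rep_of_nat mult.assoc[symmetric]
    by (simp only: Rep_times[symmetric] mult.assoc Z1) (simp only: Z2 ea es, simp)
  finally have X: "Rep (prod_list (map G [n..<M+2])) vac = (\<lambda>b. (2::'k) ^ (M + 2 - Suc n) * (2 * dl (alf p M n) (sgs M n) b))" .
  have e2: "(2::'k) ^ (M + 2 - n) = 2 ^ (M + 2 - Suc n) * 2"
  proof -
    have "M + 2 - n = Suc (M + 2 - Suc n)" using step(2) by simp
    thus ?thesis by (simp only: power_Suc2)
  qed
  have Geq: "(\<lambda>r. kop p (hT (2*r - 1)) (hT (2*r) :: 'k op)) = G" by (simp add: G_def fun_eq_iff)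
  show ?case unfolding Geq X e2 by (simp add: mult.assoc)
qed

lemma T_closure_least: "T_space V \<Longrightarrow> H \<subseteq> V \<Longrightarrow> T_closure H \<subseteq> V"
  unfolding T_closure_def by blast
lemma T_closure_incl: "H \<subseteq> T_closure H"
  unfolding T_closure_def by blast
lemma T_closure_mono: "H \<subseteq> H' \<Longrightarrow> T_closure H \<subseteq> T_closure H'"
  unfolding T_closure_def by blast

lemma T_closure_Tspace:
  assumes "T_space V" "H \<subseteq> V"
  shows "T_space (T_closure H)"
proof -
  let ?F = "{V. T_space V \<and> H \<subseteq> V}"
  have ne: "V \<in> ?F" using assms by simp
  show ?thesis unfolding T_closure_def T_space_def[of "\<Inter>?F"] is_subspace_def[of "\<Inter>?F"]
  proof (intro conjI allI impI ballI)
    show "\<Inter>?F \<subseteq> fa_carrier" using ne unfolding T_space_def is_subspace_def by blast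
    show "fa_zero \<in> \<Inter>?F" unfolding T_space_def is_subspace_def by blast
    show "fa_add f g \<in> \<Inter>?F" if "f \<in> \<Inter>?F" "g \<in> \<Inter>?F" for f g
      using that unfolding T_space_def is_subspace_def by blast
    show "fa_smult c f \<in> \<Inter>?F" if "f \<in> \<Inter>?F" for c f
      using that unfolding T_space_def is_subspace_def by blast
    show "fa_subst \<sigma> f \<in> \<Inter>?F" if "\<forall>i. \<sigma> i \<in> fa_carrier" "f \<in> \<Inter>?F" for \<sigma> f
      using that unfolding T_space_def is_subspace_def by blast
  qed
qed

definition VM :: "nat \<Rightarrow> nat \<Rightarrow> 'k::field fa set" where
  "VM p M = {f \<in> fa_carrier. \<forall>h. (\<forall>i. h i \<in> Bset) \<longrightarrow> Rep (ev h f) (vac :: 'k vec) (alf p M 1, sgs M 1) = 0}"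

lemma sgs1: "sgs M 1 = {1..2*M+2}" by (auto simp: sgs_def)

lemma VM_T: "T_space (VM p M :: 'k::field fa set)"
  unfolding T_space_def is_subspace_def
proof (intro conjI allI impI ballI)
  show "VM p M \<subseteq> fa_carrier" unfolding VM_def by blast
  show "fa_zero \<in> (VM p M :: 'k fa set)" unfolding VM_def by (simp add: carrier_zero evf_zero Rep_zero)
  show "fa_add f g \<in> VM p M" if "f \<in> (VM p M :: 'k fa set)" "g \<in> VM p M" for f g
    using that unfolding VM_def by (simp add: carrier_add evf_add Rep_plus)
  show "fa_smult c f \<in> VM p M" if "f \<in> (VM p M :: 'k fa set)" for c f
    using that unfolding VM_def by (simp add: carrier_smult evf_smult Rep_times Rep_sc)
  show "fa_subst \<sigma> f \<in> VM p M" if s: "\<forall>i. \<sigma> i \<in> fa_carrier" and f: "f \<in> (VM p M :: 'k fa set)" for \<sigma> f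
  proof -
    have fc: "f \<in> fa_carrier" using f unfolding VM_def by blast
    have "\<forall>h. (\<forall>i. h i \<in> Bset) \<longrightarrow> Rep (ev h (fa_subst \<sigma> f)) (vac :: 'k vec) (alf p M 1, sgs M 1) = 0"
    proof (intro allI impI)
      fix h :: "nat \<Rightarrow> 'k op" assume h: "\<forall>i. h i \<in> Bset"
      have A: "\<forall>i. ev h (\<sigma> i) \<in> Bset" using h s by (auto intro: ev_B)
      have B: "\<forall>h'. (\<forall>i. h' i \<in> Bset) \<longrightarrow> Rep (ev h' f) (vac :: 'k vec) (alf p M 1, sgs M 1) = 0"
        using f unfolding VM_def by blast
      have "Rep (ev (\<lambda>i. ev h (\<sigma> i)) f) (vac :: 'k vec) (alf p M 1, sgs M 1) = 0"
        using mp[OF spec[OF B, of "\<lambda>i. ev h (\<sigma> i)"] A] by simp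
      thus "Rep (ev h (fa_subst \<sigma> f)) (vac :: 'k vec) (alf p M 1, sgs M 1) = 0"
        using subst_carrier_ev[OF fc s] by simp
    qed
    thus ?thesis unfolding VM_def using subst_carrier_ev[OF fc s] by blast
  qed
qed

lemma VM_W:
  assumes two: "(2::'k::field) \<noteq> 0" and p: "2 \<le> p" and pz: "of_nat p = (0::'k)"
  shows "{fa_one} \<union> W_set p M \<subseteq> (VM p M :: 'k fa set)"
proof -
  have sfin: "finite (sgs M 1)" unfolding sgs1 by simp
  have scard: "card (sgs M 1) = 2*M+2" unfolding sgs1 by simp
  have az: "\<forall>i\<in>sgs M 1. of_nat (alf p M 1 i + 1) = (0::'k)"
    using p pz by (auto simp: alf_def sgs_def)
  have ne: "sgs M 1 \<noteq> {}" unfolding sgs1 by simp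
  have "fa_one \<in> (VM p M :: 'k fa set)"
    unfolding VM_def using ne by (simp add: carrier_one evf_one Rep_one vac_def)
  moreover have "w \<in> VM p M" if w: "w \<in> W_set p M" for w :: "'k fa"
  proof -
    obtain j f where jf: "1 \<le> j" "j \<le> M" "w = w_poly p j (\<lambda>r. fa_var (f r))"
      using w unfolding W_set_def by blast
    have uc: "\<forall>r. fa_var (f r) \<in> fa_carrier" by (simp add: carrier_var)
    have "Rep (ev h w) (vac :: 'k vec) (alf p M 1, sgs M 1) = 0" if h: "\<forall>i. h i \<in> Bset" for h :: "nat \<Rightarrow> 'k op"
    proof -
      have e: "ev h w = prod_list (map (\<lambda>r. kop p (h (f (2*r - 1))) (h (f (2*r)))) [1..<j+1])"
        unfolding jf(3) ev_wpoly[OF uc] by (simp add: evf_var)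
      have "Good (2 * length (map (\<lambda>r. kop p (h (f (2*r - 1))) (h (f (2*r)))) [1..<j+1])) (ev h w)"
        unfolding e by (rule Good_prodlist) (auto intro: Good_kop[OF two p] simp: h)
      moreover have "length (map (\<lambda>r. kop p (h (f (2*r - 1))) (h (f (2*r)))) [1..<j+1]) = j" by simp
      ultimately have "Good (2 * j) (ev h w)" by metis
      moreover have "2 * j \<noteq> card (sgs M 1)" using scard jf by simp
      ultimately show ?thesis using Good_vac[OF _ _ sfin az] by blast
    qed
    thus ?thesis unfolding VM_def jf(3) by (simp add: carrier_wpoly[OF uc])
  qed
  ultimately show ?thesis by blast
qed

lemma VM_notin:
  assumes two: "(2::'k::field) \<noteq> 0" and p: "2 \<le> p"
  shows "w_poly p (M + 1) fa_var \<notin> (VM p M :: 'k fa set)"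
proof
  assume a: "w_poly p (M + 1) fa_var \<in> (VM p M :: 'k fa set)"
  have hB: "\<forall>i. (hT i :: 'k op) \<in> Bset" by (simp add: hT_B)
  have uc: "\<forall>r. fa_var r \<in> fa_carrier" by (simp add: carrier_var)
  have e: "ev hT (w_poly p (M + 1) fa_var) = prod_list (map (\<lambda>r. kop p (hT (2*r - 1)) (hT (2*r) :: 'k op)) [1..<M+2])"
    unfolding ev_wpoly[OF uc] by (simp add: evf_var)
  have X: "Rep (prod_list (map (\<lambda>r. kop p (hT (2*r - 1)) (hT (2*r) :: 'k op)) [1..<M+2])) vac
       = (\<lambda>b. (2::'k) ^ (M + 2 - 1) * dl (alf p M 1) (sgs M 1) b)"
    by (rule prod_comp[OF two p]) simp_all
  have "Rep (ev hT (w_poly p (M + 1) fa_var)) (vac :: 'k vec) (alf p M 1, sgs M 1) = (2::'k) ^ (M + 1)"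
    unfolding e X by (simp add: dl_def)
  moreover have "Rep (ev hT (w_poly p (M + 1) fa_var)) (vac :: 'k vec) (alf p M 1, sgs M 1) = 0"
    using a hB unfolding VM_def by blast
  ultimately show False using two by simp
qed

theorem corollary3p2:
  fixes p :: nat
  assumes "prime p" and "p > 2" and "CHAR('k::field) = p"
  shows "\<not> finitely_based (T_closure (W' p :: 'k fa set))"
proof
  assume "finitely_based (T_closure (W' p :: 'k fa set))"
  then obtain H :: "'k fa set" where H: "finite H" "H \<subseteq> fa_carrier" "T_closure (W' p) = T_closure H"
    unfolding finitely_based_def by blast
  have p2: "2 \<le> p" using assms by simp
  have pz: "of_nat p = (0::'k)" using assms(3) of_nat_CHAR[where 'a='k] by simp
  have two: "(2::'k) \<noteq> 0"
  proof
    assume "(2::'k) = 0"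
    hence "of_nat 2 = (0::'k)" by simp
    hence "p dvd 2" using of_nat_eq_0_iff_char_dvd[where 'a='k, of 2] assms(3) by simp
    thus False using assms(2) by (auto dest: dvd_imp_le)
  qed
  define Wm where "Wm M = ({fa_one} \<union> W_set p M :: 'k fa set)" for M
  have VT: "T_space (VM p M :: 'k fa set)" for M by (rule VM_T)
  have WV: "Wm M \<subseteq> (VM p M :: 'k fa set)" for M using VM_W[OF two p2 pz] unfolding Wm_def .
  have TT: "T_space (T_closure (Wm M :: 'k fa set))" for M using T_closure_Tspace[OF VT WV] .
  have mono: "T_closure (Wm M :: 'k fa set) \<subseteq> T_closure (Wm M')" if "M \<le> M'" for M M'
  proof (rule T_closure_mono)
    show "Wm M \<subseteq> Wm M'" unfolding Wm_def W_set_def using that by auto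
  qed
  define U where "U = (\<Union>M. T_closure (Wm M :: 'k fa set))"
  have UT: "T_space U"
    unfolding T_space_def[of U] is_subspace_def[of U]
  proof (intro conjI allI impI ballI)
    show "U \<subseteq> fa_carrier" unfolding U_def using TT unfolding T_space_def is_subspace_def by blast
    show "fa_zero \<in> U" unfolding U_def using TT[of 0] unfolding T_space_def is_subspace_def by blast
    show "fa_add f g \<in> U" if fg: "f \<in> U" "g \<in> U" for f g
    proof -
      obtain a b where ab: "f \<in> T_closure (Wm a)" "g \<in> T_closure (Wm b)" using fg unfolding U_def by blast
      have "f \<in> T_closure (Wm (max a b))" "g \<in> T_closure (Wm (max a b))"
        using ab mono[of a "max a b"] mono[of b "max a b"] by auto
      hence "fa_add f g \<in> T_closure (Wm (max a b))" using TT[of "max a b"] unfolding T_space_def is_subspace_def by blast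
      thus ?thesis unfolding U_def by blast
    qed
    show "fa_smult c f \<in> U" if f: "f \<in> U" for c f
    proof -
      obtain a where a: "f \<in> T_closure (Wm a)" using f unfolding U_def by blast
      have "\<forall>c. \<forall>f\<in>T_closure (Wm a). fa_smult c f \<in> T_closure (Wm a)"
        using TT[of a] unfolding T_space_def is_subspace_def by blast
      hence "fa_smult c f \<in> T_closure (Wm a)" using a by blast
      thus ?thesis unfolding U_def by blast
    qed
    show "fa_subst \<sigma> f \<in> U" if s: "\<forall>i. \<sigma> i \<in> fa_carrier" and f: "f \<in> U" for \<sigma> f
    proof -
      obtain a where a: "f \<in> T_closure (Wm a)" using f unfolding U_def by blast
      have "\<forall>\<sigma>. (\<forall>i. \<sigma> i \<in> fa_carrier) \<longrightarrow> (\<forall>f\<in>T_closure (Wm a). fa_subst \<sigma> f \<in> T_closure (Wm a))"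
        using TT[of a] unfolding T_space_def by blast
      hence "fa_subst \<sigma> f \<in> T_closure (Wm a)" using a s by blast
      thus ?thesis unfolding U_def by blast
    qed
  qed
  have "W' p \<subseteq> U"
  proof
    fix w assume "w \<in> (W' p :: 'k fa set)"
    hence "w \<in> Wm 1 \<or> (\<exists>m. w \<in> Wm m)" unfolding W'_def W_all_def Wm_def by blast
    then obtain m where "w \<in> Wm m" by blast
    thus "w \<in> U" unfolding U_def using T_closure_incl by blast
  qed
  hence "T_closure (W' p) \<subseteq> U" by (rule T_closure_least[OF UT])
  hence HU: "H \<subseteq> U" using H(3) T_closure_incl[of H] by blast
  hence "\<forall>g\<in>H. \<exists>M. g \<in> T_closure (Wm M)" unfolding U_def by blast
  then obtain Mf where Mf: "\<forall>g\<in>H. g \<in> T_closure (Wm (Mf g))" by metis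
  define M where "M = Max (insert 0 (Mf ` H))"
  have "Mf g \<le> M" if "g \<in> H" for g unfolding M_def using H(1) that by (intro Max_ge) auto
  hence "H \<subseteq> T_closure (Wm M)" using Mf mono by blast
  also have "\<dots> \<subseteq> VM p M" by (rule T_closure_least[OF VT WV])
  finally have "T_closure H \<subseteq> VM p M" by (rule T_closure_least[OF VT])
  moreover have "w_poly p (M + 1) fa_var \<in> T_closure H"
  proof -
    have "(\<lambda>r::nat. r) \<in> I_set (M + 1)" unfolding I_set_def by (auto simp: strict_mono_on_def)
    hence "w_poly p (M + 1) fa_var \<in> (W_set p (M + 1) :: 'k fa set)"
      unfolding W_set_def mem_Collect_eq
      by (intro exI[of _ "M + 1"] exI[of _ "\<lambda>r::nat. r"]) simp
    hence "w_poly p (M + 1) fa_var \<in> (W' p :: 'k fa set)" unfolding W'_def W_all_def by auto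
    thus ?thesis using H(3) T_closure_incl by blast
  qed
  ultimately show False using VM_notin[OF two p2, of M] by blast
qed

end
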